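(* Let $f(x;w)$ be a vanilla fully connected ReLU network, a ResNet, or a DenseNet, let $x\neq0$, and let $W^{\mathbf{k}}$ be any weight matrix of $f$. Then the set $\big\{w: J^{\mathbf{k}}=\frac{\partial f_{\mathbf{k}}(x;w)}{\partial W^{\mathbf{k}}}\big\}$ has full measure (its complement has Lebesgue measure zero), where $J^{\mathbf{k}}=\frac{\partial f(x;w)}{\partial W^{\mathbf{k}}}$.
   Context: $\phi(t)=\max(0,t)$. Vanilla: $y^0=\frac{1}{\sqrt{n_0}}W^0x$, $y^l=\sqrt2\phi(\frac{1}{\sqrt{n_{l-1}}}W^ly^{l-1})$, $f=\frac{1}{\sqrt{n_L}}W^{L+1}y^L$. ResNet: $y^0=\frac{1}{\sqrt{n_0}}W^0x$; $y^l=y^{l-1}+\sqrt{\alpha_l}\,y^{l-1,m}$ with $y^{l-1,1}=\frac{1}{\sqrt{n_{l-1}}}W^{l,1}y^{l-1}$, $y^{l-1,h}=\frac{1}{\sqrt{n_{l-1,h-1}}}W^{l,h}q^{l-1,h-1}$ ($1<h\le m$), $q^{l-1,h}=\sqrt2\phi(y^{l-1,h})$, $\alpha_l>0$; $f=\frac{1}{\sqrt{n_L}}W^Ly^L$. DenseNet: $y^0=\frac{1}{\sqrt{n_0}}W^0x$, $y^l=\sqrt{\frac{\alpha}{n_{l-1}l}}\sum_{h=0}^{l-1}W^{l,h}q^h$, $q^h=\sqrt2\phi(y^h)$, $\alpha>0$; $f=\frac{1}{\sqrt{n_L}}W^Ly^L$. Dimensions compatible. Path decomposition: $f(x;w)=\sum_{\gamma\in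 S}c_\gamma z_\gamma\prod_{l=1}^{|\gamma|}w_{\gamma,l}$, where $S$ is the set of input-to-output paths in the computation graph (through weight edges, identity skips, concatenations), $w_{\gamma,l}$ the weights along $\gamma$, $c_\gamma$ the constant factors (scalings, $\sqrt2$'s, input coordinate), and $z_\gamma\in\{0,1\}$ the indicator that all ReLUs along $\gamma$ are active at $(x,w)$. With $S_{\mathbf{k}}$ the paths using a weight of $W^{\mathbf{k}}$, $f_{\mathbf{k}}(x;w)=\sum_{\gamma\in S_{\mathbf{k}}}c_\gamma z_\gamma\prod_l w_{\gamma,l}$. Derivatives are taken where they exist. *)

theory Defs
  imports "HOL-Analysis.Analysis"
begin

definition relu :: "real \<Rightarrow> real" where
  "relu t = max 0 t"

text \<open>Labels of weight matrices W^k: the input matrix W^0 (BIn), intermediate matrices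
  (BMid l h: vanilla W^l as BMid l 0, ResNet W^{l,h}, DenseNet W^{l,h}) and the
  output matrix (BOut: vanilla W^{L+1}, ResNet/DenseNet W^L).\<close>
datatype blk = BIn | BMid nat nat | BOut

text \<open>A weight index (k,i,j) is entry (row i, column j) of matrix W^k.\<close>
type_synonym widx = "blk \<times> nat \<times> nat"

text \<open>Nodes of the computation graph: input coordinates, hidden units, output units.\<close>
datatype node = NIn nat | N nat nat nat | NOut nat

text \<open>Edge (u, v, c, wo): from u to v, constant factor c, and either a weight (Some a)
  or an identity skip (None).\<close>
type_synonym edge = "node \<times> node \<times> real \<times> widx option"

definition is_path :: "edge set \<Rightarrow> node set \<Rightarrow> node \<Rightarrow> edge list \<Rightarrow> bool" where
  "is_path E ins out \<gamma> \<longleftrightarrow> \<gamma> \<noteq> [] \<and> set \<gamma> \<subseteq> E \<and> fst (hd \<gamma>) \<in> ins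
     \<and> fst (snd (last \<gamma>)) = out
     \<and> (\<forall>i. Suc i < length \<gamma> \<longrightarrow> fst (snd (\<gamma> ! i)) = fst (\<gamma> ! Suc i))"

text \<open>c_gamma z_gamma prod w: input coordinate times, for every edge, its constant,
  its weight (1 for identity skips) and the activity indicator of its target node
  (act v is True for linear nodes and the indicator "pre-activation > 0" for ReLU nodes).\<close>
definition path_term :: "(node \<Rightarrow> real) \<Rightarrow> (node \<Rightarrow> bool) \<Rightarrow> (widx \<Rightarrow> real) \<Rightarrow> edge list \<Rightarrow> real" where
  "path_term xin act w \<gamma> = xin (fst (hd \<gamma>)) *
     prod_list (map (\<lambda>(u, v, c, wo). c * (case wo of None \<Rightarrow> 1 | Some a \<Rightarrow> w a)
                                        * (if act v then 1 else 0)) \<gamma>)"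

definition uses_block :: "blk \<Rightarrow> edge list \<Rightarrow> bool" where
  "uses_block k \<gamma> \<longleftrightarrow> (\<exists>e\<in>set \<gamma>. \<exists>a. snd (snd (snd e)) = Some a \<and> fst a = k)"

definition path_fk :: "edge set \<Rightarrow> node set \<Rightarrow> node \<Rightarrow> (node \<Rightarrow> real) \<Rightarrow> (node \<Rightarrow> bool)
    \<Rightarrow> (widx \<Rightarrow> real) \<Rightarrow> blk \<Rightarrow> real" where
  "path_fk E ins out xin act w k =
     (\<Sum>\<gamma>\<in>{\<gamma>. is_path E ins out \<gamma> \<and> uses_block k \<gamma>}. path_term xin act w \<gamma>)"

definition in_nodes :: "nat \<Rightarrow> node set" where
  "in_nodes d = {NIn j |j. j < d}"

definition xin :: "(nat \<Rightarrow> real) \<Rightarrow> node \<Rightarrow> real" where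
  "xin x v = (case v of NIn j \<Rightarrow> x j | _ \<Rightarrow> 0)"

definition partials_agree_ae ::
  "widx set \<Rightarrow> ((widx \<Rightarrow> real) \<Rightarrow> real) \<Rightarrow> ((widx \<Rightarrow> real) \<Rightarrow> real) \<Rightarrow> blk \<Rightarrow> bool" where
  "partials_agree_ae I F G k \<longleftrightarrow>
     (AE w in (\<Pi>\<^sub>M a\<in>I. lborel). \<forall>a\<in>I. fst a = k \<longrightarrow>
        (\<exists>D. ((\<lambda>t. F (w(a := t))) has_real_derivative D) (at (w a))
           \<and> ((\<lambda>t. G (w(a := t))) has_real_derivative D) (at (w a))))"

text \<open>Input x in R^d, widths n 0, ..., n L, output dimension dout.\<close>

primrec van_y :: "nat \<Rightarrow> (nat \<Rightarrow> nat) \<Rightarrow> (nat \<Rightarrow> real) \<Rightarrow> (widx \<Rightarrow> real) \<Rightarrow> nat \<Rightarrow> nat \<Rightarrow> real" where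
  "van_y d n x w 0 = (\<lambda>i. (1 / sqrt (real (n 0))) * (\<Sum>j<d. w (BIn, i, j) * x j))"
| "van_y d n x w (Suc l) = (\<lambda>i. sqrt 2 * relu ((1 / sqrt (real (n l))) *
       (\<Sum>j<n l. w (BMid (Suc l) 0, i, j) * van_y d n x w l j)))"

text \<open>Pre-activation of unit i of layer l (l \<ge> 1).\<close>
definition van_s :: "nat \<Rightarrow> (nat \<Rightarrow> nat) \<Rightarrow> (nat \<Rightarrow> real) \<Rightarrow> (widx \<Rightarrow> real) \<Rightarrow> nat \<Rightarrow> nat \<Rightarrow> real" where
  "van_s d n x w l i = (1 / sqrt (real (n (l - 1)))) *
       (\<Sum>j<n (l - 1). w (BMid l 0, i, j) * van_y d n x w (l - 1) j)"

definition van_f :: "nat \<Rightarrow> (nat \<Rightarrow> nat) \<Rightarrow> nat \<Rightarrow> (nat \<Rightarrow> real) \<Rightarrow> (widx \<Rightarrow> real) \<Rightarrow> nat \<Rightarrow> real" where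
  "van_f d n L x w r = (1 / sqrt (real (n L))) * (\<Sum>j<n L. w (BOut, r, j) * van_y d n x w L j)"

definition van_act :: "nat \<Rightarrow> (nat \<Rightarrow> nat) \<Rightarrow> (nat \<Rightarrow> real) \<Rightarrow> (widx \<Rightarrow> real) \<Rightarrow> node \<Rightarrow> bool" where
  "van_act d n x w v = (case v of N l h i \<Rightarrow> (l = 0 \<or> van_s d n x w l i > 0) | _ \<Rightarrow> True)"

definition van_idx :: "nat \<Rightarrow> (nat \<Rightarrow> nat) \<Rightarrow> nat \<Rightarrow> nat \<Rightarrow> widx set" where
  "van_idx d n L dout =
     {(BIn, i, j) |i j. i < n 0 \<and> j < d}
   \<union> {(BMid l 0, i, j) |l i j. 1 \<le> l \<and> l \<le> L \<and> i < n l \<and> j < n (l - 1)}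
   \<union> {(BOut, r, j) |r j. r < dout \<and> j < n L}"

definition van_edges :: "nat \<Rightarrow> (nat \<Rightarrow> nat) \<Rightarrow> nat \<Rightarrow> nat \<Rightarrow> edge set" where
  "van_edges d n L dout =
     {(NIn j, N 0 0 i, 1 / sqrt (real (n 0)), Some (BIn, i, j)) |i j. i < n 0 \<and> j < d}
   \<union> {(N (l - 1) 0 j, N l 0 i, (if l - 1 = 0 then 1 else sqrt 2) / sqrt (real (n (l - 1))),
        Some (BMid l 0, i, j)) |l i j. 1 \<le> l \<and> l \<le> L \<and> i < n l \<and> j < n (l - 1)}
   \<union> {(N L 0 j, NOut r, (if L = 0 then 1 else sqrt 2) / sqrt (real (n L)), Some (BOut, r, j))
        |r j. r < dout \<and> j < n L}"

text \<open>Common width n of y^0..y^L, m \<ge> 1 sublayers per block; nh l h is the width of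
  y^{l-1,h} for 1 \<le> h < m (the width of y^{l-1,m} is n by compatibility).\<close>

definition rdim :: "nat \<Rightarrow> (nat \<Rightarrow> nat \<Rightarrow> nat) \<Rightarrow> nat \<Rightarrow> nat \<Rightarrow> nat \<Rightarrow> nat" where
  "rdim n nh m l h = (if h = 0 \<or> h = m then n else nh l h)"

text \<open>res_inner ... l yp h = y^{l-1,h} where yp = y^{l-1}.\<close>
fun res_inner :: "nat \<Rightarrow> (nat \<Rightarrow> nat \<Rightarrow> nat) \<Rightarrow> nat \<Rightarrow> (widx \<Rightarrow> real) \<Rightarrow> nat \<Rightarrow> (nat \<Rightarrow> real)
    \<Rightarrow> nat \<Rightarrow> nat \<Rightarrow> real" where
  "res_inner n nh m w l yp 0 = yp"
| "res_inner n nh m w l yp (Suc 0) = (\<lambda>i. (1 / sqrt (real n)) * (\<Sum>j<n. w (BMid l 1, i, j) * yp j))"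
| "res_inner n nh m w l yp (Suc (Suc h)) = (\<lambda>i. (1 / sqrt (real (rdim n nh m l (Suc h)))) *
     (\<Sum>j<rdim n nh m l (Suc h). w (BMid l (Suc (Suc h)), i, j) *
        (sqrt 2 * relu (res_inner n nh m w l yp (Suc h) j))))"

primrec res_y :: "nat \<Rightarrow> nat \<Rightarrow> (nat \<Rightarrow> nat \<Rightarrow> nat) \<Rightarrow> nat \<Rightarrow> (nat \<Rightarrow> real) \<Rightarrow> (nat \<Rightarrow> real)
    \<Rightarrow> (widx \<Rightarrow> real) \<Rightarrow> nat \<Rightarrow> nat \<Rightarrow> real" where
  "res_y d n nh m \<alpha> x w 0 = (\<lambda>i. (1 / sqrt (real n)) * (\<Sum>j<d. w (BIn, i, j) * x j))"
| "res_y d n nh m \<alpha> x w (Suc l) = (\<lambda>i. res_y d n nh m \<alpha> x w l i +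
      sqrt (\<alpha> (Suc l)) * res_inner n nh m w (Suc l) (res_y d n nh m \<alpha> x w l) m i)"

definition res_f :: "nat \<Rightarrow> nat \<Rightarrow> (nat \<Rightarrow> nat \<Rightarrow> nat) \<Rightarrow> nat \<Rightarrow> nat \<Rightarrow> (nat \<Rightarrow> real) \<Rightarrow> (nat \<Rightarrow> real)
    \<Rightarrow> (widx \<Rightarrow> real) \<Rightarrow> nat \<Rightarrow> real" where
  "res_f d n nh m L \<alpha> x w r = (1 / sqrt (real n)) * (\<Sum>j<n. w (BOut, r, j) * res_y d n nh m \<alpha> x w L j)"

text \<open>Nodes: N l 0 i is y^l_i; N l h i (h \<ge> 1) is y^{l-1,h}_i, a ReLU node iff h < m.\<close>
definition res_act :: "nat \<Rightarrow> nat \<Rightarrow> (nat \<Rightarrow> nat \<Rightarrow> nat) \<Rightarrow> nat \<Rightarrow> (nat \<Rightarrow> real) \<Rightarrow> (nat \<Rightarrow> real)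
    \<Rightarrow> (widx \<Rightarrow> real) \<Rightarrow> node \<Rightarrow> bool" where
  "res_act d n nh m \<alpha> x w v = (case v of
      N l h i \<Rightarrow> (h = 0 \<or> m \<le> h \<or> res_inner n nh m w l (res_y d n nh m \<alpha> x w (l - 1)) h i > 0)
    | _ \<Rightarrow> True)"

definition res_idx :: "nat \<Rightarrow> nat \<Rightarrow> (nat \<Rightarrow> nat \<Rightarrow> nat) \<Rightarrow> nat \<Rightarrow> nat \<Rightarrow> nat \<Rightarrow> widx set" where
  "res_idx d n nh m L dout =
     {(BIn, i, j) |i j. i < n \<and> j < d}
   \<union> {(BMid l h, i, j) |l h i j. 1 \<le> l \<and> l \<le> L \<and> 1 \<le> h \<and> h \<le> m
        \<and> i < rdim n nh m l h \<and> j < rdim n nh m l (h - 1)}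
   \<union> {(BOut, r, j) |r j. r < dout \<and> j < n}"

definition res_edges :: "nat \<Rightarrow> nat \<Rightarrow> (nat \<Rightarrow> nat \<Rightarrow> nat) \<Rightarrow> nat \<Rightarrow> nat \<Rightarrow> (nat \<Rightarrow> real) \<Rightarrow> nat
    \<Rightarrow> edge set" where
  "res_edges d n nh m L \<alpha> dout =
     {(NIn j, N 0 0 i, 1 / sqrt (real n), Some (BIn, i, j)) |i j. i < n \<and> j < d}
   \<union> {(if h = 1 then N (l - 1) 0 j else N l (h - 1) j, N l h i,
        (if h = 1 then 1 else sqrt 2) / sqrt (real (rdim n nh m l (h - 1))), Some (BMid l h, i, j))
        |l h i j. 1 \<le> l \<and> l \<le> L \<and> 1 \<le> h \<and> h \<le> m
          \<and> i < rdim n nh m l h \<and> j < rdim n nh m l (h - 1)}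
   \<union> {(N (l - 1) 0 i, N l 0 i, 1, None) |l i. 1 \<le> l \<and> l \<le> L \<and> i < n}
   \<union> {(N l m i, N l 0 i, sqrt (\<alpha> l), None) |l i. 1 \<le> l \<and> l \<le> L \<and> i < n}
   \<union> {(N L 0 j, NOut r, 1 / sqrt (real n), Some (BOut, r, j)) |r j. r < dout \<and> j < n}"

text \<open>Widths n 0..n L; dense_ys l h = y^h for h \<le> l.\<close>

primrec dense_ys :: "nat \<Rightarrow> (nat \<Rightarrow> nat) \<Rightarrow> real \<Rightarrow> (nat \<Rightarrow> real) \<Rightarrow> (widx \<Rightarrow> real)
    \<Rightarrow> nat \<Rightarrow> nat \<Rightarrow> nat \<Rightarrow> real" where
  "dense_ys d n \<alpha> x w 0 = (\<lambda>h i. (1 / sqrt (real (n 0))) * (\<Sum>j<d. w (BIn, i, j) * x j))"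
| "dense_ys d n \<alpha> x w (Suc l) = (\<lambda>h. if h = Suc l then
      (\<lambda>i. sqrt (\<alpha> / (real (n l) * real (Suc l))) *
         (\<Sum>h'<Suc l. \<Sum>j<n h'. w (BMid (Suc l) h', i, j) * (sqrt 2 * relu (dense_ys d n \<alpha> x w l h' j))))
    else dense_ys d n \<alpha> x w l h)"

definition dense_y :: "nat \<Rightarrow> (nat \<Rightarrow> nat) \<Rightarrow> real \<Rightarrow> (nat \<Rightarrow> real) \<Rightarrow> (widx \<Rightarrow> real)
    \<Rightarrow> nat \<Rightarrow> nat \<Rightarrow> real" where
  "dense_y d n \<alpha> x w h = dense_ys d n \<alpha> x w h h"

definition dense_f :: "nat \<Rightarrow> (nat \<Rightarrow> nat) \<Rightarrow> nat \<Rightarrow> real \<Rightarrow> (nat \<Rightarrow> real) \<Rightarrow> (widx \<Rightarrow> real)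
    \<Rightarrow> nat \<Rightarrow> real" where
  "dense_f d n L \<alpha> x w r = (1 / sqrt (real (n L))) * (\<Sum>j<n L. w (BOut, r, j) * dense_y d n \<alpha> x w L j)"

text \<open>Node N h 0 i is y^h_i; a ReLU node (feeding q^h) iff h < L.\<close>
definition dense_act :: "nat \<Rightarrow> (nat \<Rightarrow> nat) \<Rightarrow> nat \<Rightarrow> real \<Rightarrow> (nat \<Rightarrow> real) \<Rightarrow> (widx \<Rightarrow> real)
    \<Rightarrow> node \<Rightarrow> bool" where
  "dense_act d n L \<alpha> x w v = (case v of N h k i \<Rightarrow> (L \<le> h \<or> dense_y d n \<alpha> x w h i > 0) | _ \<Rightarrow> True)"

definition dense_idx :: "nat \<Rightarrow> (nat \<Rightarrow> nat) \<Rightarrow> nat \<Rightarrow> nat \<Rightarrow> widx set" where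
  "dense_idx d n L dout =
     {(BIn, i, j) |i j. i < n 0 \<and> j < d}
   \<union> {(BMid l h, i, j) |l h i j. 1 \<le> l \<and> l \<le> L \<and> h < l \<and> i < n l \<and> j < n h}
   \<union> {(BOut, r, j) |r j. r < dout \<and> j < n L}"

definition dense_edges :: "nat \<Rightarrow> (nat \<Rightarrow> nat) \<Rightarrow> nat \<Rightarrow> real \<Rightarrow> nat \<Rightarrow> edge set" where
  "dense_edges d n L \<alpha> dout =
     {(NIn j, N 0 0 i, 1 / sqrt (real (n 0)), Some (BIn, i, j)) |i j. i < n 0 \<and> j < d}
   \<union> {(N h 0 j, N l 0 i, sqrt (\<alpha> / (real (n (l - 1)) * real l)) * sqrt 2, Some (BMid l h, i, j))
        |l h i j. 1 \<le> l \<and> l \<le> L \<and> h < l \<and> i < n l \<and> j < n h}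
   \<union> {(N L 0 j, NOut r, 1 / sqrt (real (n L)), Some (BOut, r, j)) |r j. r < dout \<and> j < n L}"

end

theory Submission
  imports Defs "HOL-Analysis.Analysis"
begin


lemma core_null:
  fixes I :: "'i set" and b :: 'i and A B :: "('i \<Rightarrow> real) \<Rightarrow> real"
  assumes fin: "finite I" and bI: "b \<in> I"
    and Am[measurable]: "A \<in> borel_measurable (Pi\<^sub>M I (\<lambda>_. lborel))"
    and Bm[measurable]: "B \<in> borel_measurable (Pi\<^sub>M I (\<lambda>_. lborel))"
    and Ai: "\<And>w t. A (w(b := t)) = A w" and Bi: "\<And>w t. B (w(b := t)) = B w"
  shows "AE w in Pi\<^sub>M I (\<lambda>_. lborel). B w = 0 \<or> A w + w b * B w \<noteq> 0"
proof -
  interpret product_sigma_finite "\<lambda>_::'i. lborel :: real measure" by standard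
  let ?M = "Pi\<^sub>M I (\<lambda>_::'i. lborel :: real measure)"
  define N where "N = {w \<in> space ?M. B w \<noteq> 0 \<and> A w + w b * B w = 0}"
  have bm: "(\<lambda>w. w b) \<in> borel_measurable ?M"
    using bI by simp
  have Nm: "N \<in> sets ?M" unfolding N_def using bm by measurable
  have I': "I = insert b (I - {b})" using bI by auto
  have "emeasure ?M N = integral\<^sup>N ?M (indicator N)"
    using Nm by simp
  also have "\<dots> = (\<integral>\<^sup>+ x. (\<integral>\<^sup>+ y. indicator N (x(b := y)) \<partial>lborel) \<partial>(Pi\<^sub>M (I - {b}) (\<lambda>_. lborel)))"
    apply (subst I')
    apply (rule product_nn_integral_insert)
    using fin apply simp
     apply simp
    using Nm I' by (metis borel_measurable_indicator)
  also have "\<dots> = (\<integral>\<^sup>+ x. (0::ennreal) \<partial>(Pi\<^sub>M (I - {b}) (\<lambda>_::'i. lborel::real measure)))"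
  proof (intro nn_integral_cong, goal_cases)
    case (1 x)
    note x = 1
    have "(\<integral>\<^sup>+ y. indicator N (x(b := y)) \<partial>lborel) \<le> (\<integral>\<^sup>+ y. indicator {- A x / B x} y \<partial>lborel)"
    proof (rule nn_integral_mono)
      fix y :: real
      show "indicator N (x(b := y)) \<le> (indicator {- A x / B x} y :: ennreal)"
      proof (cases "x(b := y) \<in> N")
        case True
        then have "B x \<noteq> 0" "A x + y * B x = 0" unfolding N_def using Ai[of x y] Bi[of x y]
          by auto
        then have "y = - A x / B x" by (simp add: field_simps)
        then show ?thesis using True by simp
      qed simp
    qed
    also have "\<dots> = 0" by simp
    finally show "(\<integral>\<^sup>+ y. indicator N (x(b := y)) \<partial>lborel) = 0" by simp
  qed
  also have "\<dots> = 0" by simp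
  finally have "N \<in> null_sets ?M" using Nm by auto
  then show ?thesis
    by (rule AE_I') (auto simp: N_def)
qed

lemma lin_null:
  fixes I :: "'i set" and J :: "'j set" and b :: "'j \<Rightarrow> 'i"
    and u :: "'j \<Rightarrow> ('i \<Rightarrow> real) \<Rightarrow> real" and h :: "('i \<Rightarrow> real) \<Rightarrow> real"
  assumes fin: "finite I" and finJ: "finite J" and inj: "inj_on b J" and bI: "b ` J \<subseteq> I"
    and um: "\<And>j. j \<in> J \<Longrightarrow> u j \<in> borel_measurable (Pi\<^sub>M I (\<lambda>_. lborel))"
    and hm: "h \<in> borel_measurable (Pi\<^sub>M I (\<lambda>_. lborel))"
    and ui: "\<And>j j' w t. j \<in> J \<Longrightarrow> j' \<in> J \<Longrightarrow> u j (w(b j' := t)) = u j w"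
    and hi: "\<And>j' w t. j' \<in> J \<Longrightarrow> h (w(b j' := t)) = h w"
  shows "AE w in Pi\<^sub>M I (\<lambda>_. lborel). (\<forall>j\<in>J. u j w = 0) \<or> h w + (\<Sum>j\<in>J. w (b j) * u j w) \<noteq> 0"
proof -
  have "AE w in Pi\<^sub>M I (\<lambda>_. lborel). \<forall>j\<in>J. u j w = 0 \<or> h w + (\<Sum>j\<in>J. w (b j) * u j w) \<noteq> 0"
  proof (subst AE_finite_all[OF finJ], intro ballI)
    fix j assume j: "j \<in> J"
    define A where "A = (\<lambda>w. h w + (\<Sum>j'\<in>J - {j}. w (b j') * u j' w))"
    have cmp: "\<And>j'. j' \<in> J \<Longrightarrow> (\<lambda>w. w (b j')) \<in> borel_measurable (Pi\<^sub>M I (\<lambda>_. lborel))"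
      using bI by auto
    have Am: "A \<in> borel_measurable (Pi\<^sub>M I (\<lambda>_. lborel))"
      unfolding A_def using hm um cmp
      by (intro borel_measurable_add borel_measurable_sum borel_measurable_times) auto
    have Ai: "A (w(b j := t)) = A w" for w t
    proof -
      have "(\<Sum>j'\<in>J - {j}. (w(b j := t)) (b j') * u j' (w(b j := t)))
          = (\<Sum>j'\<in>J - {j}. w (b j') * u j' w)"
      proof (rule sum.cong)
        fix j' assume j': "j' \<in> J - {j}"
        then have "b j' \<noteq> b j" using inj j by (auto dest: inj_onD)
        then show "(w(b j := t)) (b j') * u j' (w(b j := t)) = w (b j') * u j' w"
          using ui[of j' j w t] j j' by simp
      qed simp
      then show ?thesis unfolding A_def using hi[OF j] by simp
    qed
    have "AE w in Pi\<^sub>M I (\<lambda>_. lborel). u j w = 0 \<or> A w + w (b j) * u j w \<noteq> 0"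
      by (rule core_null[OF fin _ Am um[OF j] Ai]) (use bI j ui[OF j j] in auto)
    moreover have "h w + (\<Sum>j\<in>J. w (b j) * u j w) = A w + w (b j) * u j w" for w
      unfolding A_def using sum.remove[OF finJ j, of "\<lambda>j. w (b j) * u j w"] by simp
    ultimately show "AE w in Pi\<^sub>M I (\<lambda>_. lborel). u j w = 0 \<or> h w + (\<Sum>j\<in>J. w (b j) * u j w) \<noteq> 0"
      by simp
  qed
  then show ?thesis by eventually_elim auto
qed




definition tgt :: "edge \<Rightarrow> node" where "tgt e = fst (snd e)"

definition efac :: "(node \<Rightarrow> bool) \<Rightarrow> (widx \<Rightarrow> real) \<Rightarrow> edge \<Rightarrow> real" where
  "efac A w = (\<lambda>(u, v, c, wo). c * (case wo of None \<Rightarrow> 1 | Some a \<Rightarrow> w a)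
                                        * (if A v then 1 else 0))"

lemma path_term_alt: "path_term xi A w \<gamma> = xi (fst (hd \<gamma>)) * prod_list (map (efac A w) \<gamma>)"
  unfolding path_term_def efac_def by simp

lemma is_path_single: "is_path E ins v [e] \<longleftrightarrow> e \<in> E \<and> fst e \<in> ins \<and> tgt e = v"
  unfolding is_path_def tgt_def by auto

lemma chain_snoc:
  assumes "ys \<noteq> []"
  shows "(\<forall>i. Suc i < length (ys @ [e]) \<longrightarrow> fst (snd ((ys @ [e]) ! i)) = fst ((ys @ [e]) ! Suc i))
     \<longleftrightarrow> (\<forall>i. Suc i < length ys \<longrightarrow> fst (snd (ys ! i)) = fst (ys ! Suc i)) \<and> fst (snd (last ys)) = fst e"
proof
  assume H: "\<forall>i. Suc i < length (ys @ [e]) \<longrightarrow> fst (snd ((ys @ [e]) ! i)) = fst ((ys @ [e]) ! Suc i)"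
  show "(\<forall>i. Suc i < length ys \<longrightarrow> fst (snd (ys ! i)) = fst (ys ! Suc i)) \<and> fst (snd (last ys)) = fst e"
  proof (intro conjI allI impI)
    fix i assume i: "Suc i < length ys"
    then show "fst (snd (ys ! i)) = fst (ys ! Suc i)"
      using H[rule_format, of i] by (simp add: nth_append)
  next
    have "Suc (length ys - 1) < length (ys @ [e])" using assms by simp
    then show "fst (snd (last ys)) = fst e"
      using H[rule_format, of "length ys - 1"] assms
      by (simp add: nth_append last_conv_nth)
  qed
next
  assume H: "(\<forall>i. Suc i < length ys \<longrightarrow> fst (snd (ys ! i)) = fst (ys ! Suc i)) \<and> fst (snd (last ys)) = fst e"
  show "\<forall>i. Suc i < length (ys @ [e]) \<longrightarrow> fst (snd ((ys @ [e]) ! i)) = fst ((ys @ [e]) ! Suc i)"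
  proof (intro allI impI)
    fix i assume i: "Suc i < length (ys @ [e])"
    show "fst (snd ((ys @ [e]) ! i)) = fst ((ys @ [e]) ! Suc i)"
    proof (cases "Suc i < length ys")
      case True
      then show ?thesis using H by (simp add: nth_append)
    next
      case False
      then have "i = length ys - 1" "Suc i = length ys" using i by auto
      then show ?thesis using H assms by (simp add: nth_append last_conv_nth)
    qed
  qed
qed

lemma is_path_snoc:
  assumes "ys \<noteq> []"
  shows "is_path E ins v (ys @ [e]) \<longleftrightarrow> e \<in> E \<and> tgt e = v \<and> is_path E ins (fst e) ys"
  using chain_snoc[OF assms, of e] assms unfolding is_path_def tgt_def by auto

lemma paths_eq:
  "{\<gamma>. is_path E ins v \<gamma>} = (\<lambda>e. [e]) ` {e\<in>E. tgt e = v \<and> fst e \<in> ins}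
     \<union> (\<lambda>(e, \<gamma>'). \<gamma>' @ [e]) ` (SIGMA e:{e\<in>E. tgt e = v}. {\<gamma>'. is_path E ins (fst e) \<gamma>'})"
proof (intro equalityI subsetI)
  fix \<gamma> assume "\<gamma> \<in> {\<gamma>. is_path E ins v \<gamma>}"
  then have p: "is_path E ins v \<gamma>" by simp
  then have "\<gamma> \<noteq> []" by (simp add: is_path_def)
  then obtain ys e where g: "\<gamma> = ys @ [e]" by (metis rev_exhaust)
  show "\<gamma> \<in> (\<lambda>e. [e]) ` {e\<in>E. tgt e = v \<and> fst e \<in> ins}
     \<union> (\<lambda>(e, \<gamma>'). \<gamma>' @ [e]) ` (SIGMA e:{e\<in>E. tgt e = v}. {\<gamma>'. is_path E ins (fst e) \<gamma>'})"
  proof (cases "ys = []")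
    case True
    then show ?thesis using p g is_path_single by auto
  next
    case False
    then have "e \<in> E \<and> tgt e = v \<and> is_path E ins (fst e) ys" using p g is_path_snoc by blast
    then show ?thesis using g by force
  qed
next
  fix \<gamma> assume "\<gamma> \<in> (\<lambda>e. [e]) ` {e\<in>E. tgt e = v \<and> fst e \<in> ins}
     \<union> (\<lambda>(e, \<gamma>'). \<gamma>' @ [e]) ` (SIGMA e:{e\<in>E. tgt e = v}. {\<gamma>'. is_path E ins (fst e) \<gamma>'})"
  then show "\<gamma> \<in> {\<gamma>. is_path E ins v \<gamma>}"
  proof
    assume "\<gamma> \<in> (\<lambda>e. [e]) ` {e\<in>E. tgt e = v \<and> fst e \<in> ins}"
    then show ?thesis using is_path_single by auto
  next
    assume "\<gamma> \<in> (\<lambda>(e, \<gamma>'). \<gamma>' @ [e]) ` (SIGMA e:{e\<in>E. tgt e = v}. {\<gamma>'. is_path E ins (fst e) \<gamma>'})"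
    then obtain e ys where "\<gamma> = ys @ [e]" "e \<in> E" "tgt e = v" "is_path E ins (fst e) ys" by auto
    moreover then have "ys \<noteq> []" by (simp add: is_path_def)
    ultimately show ?thesis using is_path_snoc by auto
  qed
qed

lemma paths_finite:
  assumes fin: "finite E" and rk: "\<And>e. e \<in> E \<Longrightarrow> rnk (fst e) < (rnk (tgt e) :: nat)"
  shows "finite {\<gamma>. is_path E ins v \<gamma>}"
proof (induction "rnk v" arbitrary: v rule: less_induct)
  case less
  have "finite (SIGMA e:{e\<in>E. tgt e = v}. {\<gamma>'. is_path E ins (fst e) \<gamma>'})"
    using fin by (intro finite_SigmaI) (auto intro!: less rk)
  then show ?case using fin by (subst paths_eq) auto
qed

definition PS :: "edge set \<Rightarrow> node set \<Rightarrow> (node \<Rightarrow> real) \<Rightarrow> (node \<Rightarrow> bool) \<Rightarrow> (widx \<Rightarrow> real) \<Rightarrow> node \<Rightarrow> real" where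
  "PS E ins xi A w v = (\<Sum>\<gamma>\<in>{\<gamma>. is_path E ins v \<gamma>}. path_term xi A w \<gamma>)"

lemma PS_rec:
  assumes fin: "finite E" and rk: "\<And>e. e \<in> E \<Longrightarrow> rnk (fst e) < (rnk (tgt e) :: nat)"
  shows "PS E ins xi A w v = (\<Sum>e\<in>{e\<in>E. tgt e = v}. efac A w e *
            ((if fst e \<in> ins then xi (fst e) else 0) + PS E ins xi A w (fst e)))"
proof -
  let ?S1 = "{e\<in>E. tgt e = v \<and> fst e \<in> ins}"
  let ?S2 = "SIGMA e:{e\<in>E. tgt e = v}. {\<gamma>'. is_path E ins (fst e) \<gamma>'}"
  have f1: "finite ?S1" using fin by auto
  have f2: "finite ?S2" using fin paths_finite[OF fin rk] by (intro finite_SigmaI) auto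
  have disj: "(\<lambda>e. [e]) ` ?S1 \<inter> (\<lambda>(e, \<gamma>'). \<gamma>' @ [e]) ` ?S2 = {}"
    by (auto simp: is_path_def)
  have inj1: "inj_on (\<lambda>e. [e]) ?S1" by (auto intro: inj_onI)
  have inj2: "inj_on (\<lambda>(e, \<gamma>'). \<gamma>' @ [e]) ?S2" by (auto intro!: inj_onI)
  have "PS E ins xi A w v = (\<Sum>e\<in>?S1. path_term xi A w [e])
       + (\<Sum>(e, \<gamma>')\<in>?S2. path_term xi A w (\<gamma>' @ [e]))"
    unfolding PS_def
    apply (subst paths_eq)
    apply (subst sum.union_disjoint)
    using f1 f2 disj apply auto[3]
    apply (subst sum.reindex[OF inj1])
    apply (subst sum.reindex[OF inj2])
    apply (simp add: case_prod_unfold)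
    done
  also have "(\<Sum>e\<in>?S1. path_term xi A w [e])
      = (\<Sum>e\<in>{e\<in>E. tgt e = v}. efac A w e * (if fst e \<in> ins then xi (fst e) else 0))"
  proof -
    have "(\<Sum>e\<in>{e\<in>E. tgt e = v}. efac A w e * (if fst e \<in> ins then xi (fst e) else 0))
        = (\<Sum>e\<in>{e\<in>E. tgt e = v}. if fst e \<in> ins then efac A w e * xi (fst e) else 0)"
      by (intro sum.cong) auto
    also have "\<dots> = (\<Sum>e\<in>{e\<in>{e\<in>E. tgt e = v}. fst e \<in> ins}. efac A w e * xi (fst e))"
      using fin by (subst sum.inter_filter) auto
    also have "{e\<in>{e\<in>E. tgt e = v}. fst e \<in> ins} = ?S1" by auto
    finally show ?thesis by (simp add: path_term_alt mult.commute)
  qed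
  also have "(\<Sum>(e, \<gamma>')\<in>?S2. path_term xi A w (\<gamma>' @ [e]))
      = (\<Sum>e\<in>{e\<in>E. tgt e = v}. \<Sum>\<gamma>'\<in>{\<gamma>'. is_path E ins (fst e) \<gamma>'}. path_term xi A w (\<gamma>' @ [e]))"
    by (rule sum.Sigma[symmetric]) (use fin paths_finite[OF fin rk] in auto)
  also have "\<dots> = (\<Sum>e\<in>{e\<in>E. tgt e = v}. efac A w e * PS E ins xi A w (fst e))"
    unfolding PS_def sum_distrib_left
  proof (intro sum.cong refl)
    fix e :: edge and \<gamma>' assume "\<gamma>' \<in> {\<gamma>'. is_path E ins (fst e) \<gamma>'}"
    then have "\<gamma>' \<noteq> []" by (simp add: is_path_def)
    then show "path_term xi A w (\<gamma>' @ [e]) = efac A w e * path_term xi A w \<gamma>'"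
      by (simp add: path_term_alt)
  qed
  finally show ?thesis by (simp add: sum.distrib[symmetric] distrib_left)
qed

lemma path_term_act_cong:
  assumes "set \<gamma> \<subseteq> E" "\<And>v. v \<in> tgt ` E \<Longrightarrow> A v = A' v"
  shows "path_term xi A w \<gamma> = path_term xi A' w \<gamma>"
proof -
  have "map (efac A w) \<gamma> = map (efac A' w) \<gamma>"
  proof (rule map_cong[OF refl])
    fix e assume "e \<in> set \<gamma>"
    then have "A (tgt e) = A' (tgt e)" using assms by auto
    then show "efac A w e = efac A' w e" unfolding efac_def tgt_def by (auto split: prod.splits)
  qed
  then show ?thesis unfolding path_term_alt by metis
qed

lemma path_term_w_cong:
  assumes "\<And>e b. e \<in> set \<gamma> \<Longrightarrow> snd (snd (snd e)) = Some b \<Longrightarrow> w b = w' b"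
  shows "path_term xi A w \<gamma> = path_term xi A w' \<gamma>"
proof -
  have "map (efac A w) \<gamma> = map (efac A w') \<gamma>"
  proof (rule map_cong[OF refl])
    fix e assume "e \<in> set \<gamma>"
    then show "efac A w e = efac A w' e" using assms[of e] unfolding efac_def
      by (auto split: prod.splits option.splits)
  qed
  then show ?thesis unfolding path_term_alt by metis
qed

lemma upd_differentiable: "(\<lambda>t. (w(a := t)) b) differentiable (at t0)"
  by (cases "a = b") auto

lemma if_differentiable: "(\<lambda>t. if P then t else c) differentiable (at (t0::real))"
  by (cases P) auto

lemma prod_list_differentiable:
  assumes "\<And>e. e \<in> set \<gamma> \<Longrightarrow> (\<lambda>t. g t e) differentiable (at (t0::real))"
  shows "(\<lambda>t. prod_list (map (g t) \<gamma>) :: real) differentiable (at t0)"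
  using assms by (induction \<gamma>) (auto intro!: differentiable_mult)

lemma path_term_differentiable:
  "(\<lambda>t. path_term xi A (w(a := t)) \<gamma>) differentiable (at t0)"
proof -
  have "(\<lambda>t. prod_list (map (efac A (w(a := t))) \<gamma>)) differentiable (at t0)"
  proof (rule prod_list_differentiable)
    fix e :: edge
    obtain u v c wo where e: "e = (u, v, c, wo)" by (cases e) auto
    show "(\<lambda>t. efac A (w(a := t)) e) differentiable (at t0)"
      unfolding e efac_def
      by (cases wo) (auto intro!: differentiable_mult if_differentiable)
  qed
  then show ?thesis unfolding path_term_alt by (auto intro!: differentiable_mult)
qed

lemma deriv_generic:
  fixes act :: "(widx \<Rightarrow> real) \<Rightarrow> node \<Rightarrow> bool"
  assumes fin: "finite E" and rk: "\<And>e. e \<in> E \<Longrightarrow> rnk (fst e) < (rnk (tgt e) :: nat)"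
    and Fdef: "\<And>w'. F w' = PS E ins xi (act w') w' out"
    and ka: "fst a = k"
    and ev: "\<forall>\<^sub>F t in nhds (w a). \<forall>v\<in>tgt ` E. act (w(a := t)) v = act w v"
  shows "\<exists>D. ((\<lambda>t. F (w(a := t))) has_real_derivative D) (at (w a))
           \<and> ((\<lambda>t. path_fk E ins out xi (act (w(a := t))) (w(a := t)) k) has_real_derivative D) (at (w a))"
proof -
  let ?P = "{\<gamma>. is_path E ins out \<gamma>}"
  let ?K = "{\<gamma>. is_path E ins out \<gamma> \<and> uses_block k \<gamma>}"
  have finP: "finite ?P" by (rule paths_finite[OF fin rk])
  have finK: "finite ?K" by (rule finite_subset[OF _ finP]) auto
  have sub: "\<And>\<gamma>. \<gamma> \<in> ?P \<Longrightarrow> set \<gamma> \<subseteq> E" by (simp add: is_path_def)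
  define G0 where "G0 = (\<lambda>t. \<Sum>\<gamma>\<in>?K. path_term xi (act w) (w(a := t)) \<gamma>)"
  define C where "C = (\<Sum>\<gamma>\<in>?P - ?K. path_term xi (act w) w \<gamma>)"
  have ev1: "\<forall>\<^sub>F t in nhds (w a). path_fk E ins out xi (act (w(a := t))) (w(a := t)) k = G0 t
              \<and> F (w(a := t)) = G0 t + C"
    using ev
  proof eventually_elim
    case (elim t)
    have cong: "path_term xi (act (w(a := t))) (w(a := t)) \<gamma> = path_term xi (act w) (w(a := t)) \<gamma>"
      if "\<gamma> \<in> ?P" for \<gamma>
      by (rule path_term_act_cong[OF sub[OF that]]) (use elim in auto)
    have 1: "path_fk E ins out xi (act (w(a := t))) (w(a := t)) k = G0 t"
      unfolding path_fk_def G0_def by (intro sum.cong) (auto intro!: cong)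
    have "F (w(a := t)) = (\<Sum>\<gamma>\<in>?P. path_term xi (act w) (w(a := t)) \<gamma>)"
      unfolding Fdef PS_def by (intro sum.cong) (auto intro!: cong)
    also have "\<dots> = G0 t + (\<Sum>\<gamma>\<in>?P - ?K. path_term xi (act w) (w(a := t)) \<gamma>)"
      unfolding G0_def using finP by (subst sum.subset_diff[of ?K]) auto
    also have "(\<Sum>\<gamma>\<in>?P - ?K. path_term xi (act w) (w(a := t)) \<gamma>) = C"
      unfolding C_def
    proof (intro sum.cong refl path_term_w_cong)
      fix \<gamma> e b assume g: "\<gamma> \<in> ?P - ?K" and e: "e \<in> set \<gamma>" "snd (snd (snd e)) = Some b"
      then have "fst b \<noteq> k" unfolding uses_block_def by blast
      then have "b \<noteq> a" using ka by auto
      then show "(w(a := t)) b = w b" by simp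
    qed
    finally have 2: "F (w(a := t)) = G0 t + C" .
    show ?case using 1 2 by blast
  qed
  have "G0 differentiable (at (w a))"
    unfolding G0_def using finK by (intro differentiable_sum) (auto intro: path_term_differentiable)
  then have D0: "(G0 has_real_derivative deriv G0 (w a)) (at (w a))"
    by (simp add: DERIV_deriv_iff_real_differentiable)
  then have D1: "((\<lambda>t. G0 t + C) has_real_derivative deriv G0 (w a)) (at (w a))"
    by (auto intro!: derivative_eq_intros)
  have "((\<lambda>t. F (w(a := t))) has_real_derivative deriv G0 (w a)) (at (w a))"
    by (rule DERIV_cong_ev[THEN iffD1, OF refl _ refl D1]) (use ev1 in \<open>auto elim: eventually_mono\<close>)
  moreover have "((\<lambda>t. path_fk E ins out xi (act (w(a := t))) (w(a := t)) k) has_real_derivative deriv G0 (w a)) (at (w a))"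
    by (rule DERIV_cong_ev[THEN iffD1, OF refl _ refl D0]) (use ev1 in \<open>auto elim: eventually_mono\<close>)
  ultimately show ?thesis by blast
qed




lemma meas_comp_any[measurable]:
  "(\<lambda>w. w a) \<in> borel_measurable (Pi\<^sub>M I (\<lambda>_. lborel :: real measure))"
proof (cases "a \<in> I")
  case True
  then show ?thesis by simp
next
  case False
  have "\<And>w. w \<in> space (Pi\<^sub>M I (\<lambda>_. lborel :: real measure)) \<Longrightarrow> w a = undefined"
    using False by (auto simp: space_PiM PiE_def extensional_def)
  then show ?thesis by (subst measurable_cong[where g = "\<lambda>_. undefined"]) auto
qed

lemma relu_measurable[measurable]: "relu \<in> borel_measurable borel"
  unfolding relu_def by measurable

lemma isCont_relu: "isCont relu x"
  unfolding relu_def by (intro continuous_intros)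

definition lcont :: "((widx \<Rightarrow> real) \<Rightarrow> real) \<Rightarrow> bool" where
  "lcont f \<longleftrightarrow> (\<forall>w a. isCont (\<lambda>t. f (w(a := t))) (w a))"

lemma lcont_const: "lcont (\<lambda>w. c)"
  unfolding lcont_def by simp

lemma lcont_comp_w: "lcont (\<lambda>w. w b)"
  unfolding lcont_def
proof (intro allI)
  fix w :: "widx \<Rightarrow> real" and a
  show "isCont (\<lambda>t. (w(a := t)) b) (w a)"
    by (cases "a = b") simp_all
qed

lemma lcont_add: "lcont f \<Longrightarrow> lcont g \<Longrightarrow> lcont (\<lambda>w. f w + g w)"
  unfolding lcont_def by (auto intro!: continuous_intros)

lemma lcont_mult: "lcont f \<Longrightarrow> lcont g \<Longrightarrow> lcont (\<lambda>w. f w * g w)"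
  unfolding lcont_def by (auto intro!: continuous_intros)

lemma lcont_relu: "lcont f \<Longrightarrow> lcont (\<lambda>w. relu (f w))"
  unfolding lcont_def
  by (auto intro!: continuous_at_compose[of _ _ relu, unfolded o_def] isCont_relu)

lemma lcont_sum: "(\<And>j. j \<in> J \<Longrightarrow> lcont (f j)) \<Longrightarrow> lcont (\<lambda>w. \<Sum>j\<in>J. f j w)"
  unfolding lcont_def by (auto intro!: continuous_intros)

lemma lcont_div: "lcont f \<Longrightarrow> lcont (\<lambda>w. f w / c)"
  unfolding divide_inverse by (intro lcont_mult lcont_const)

lemmas lcont_intros = lcont_div lcont_const lcont_comp_w lcont_add lcont_mult lcont_relu lcont_sum

definition zstable :: "((widx \<Rightarrow> real) \<Rightarrow> real) \<Rightarrow> (widx \<Rightarrow> real) \<Rightarrow> bool" where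
  "zstable f w \<longleftrightarrow> f w \<noteq> 0 \<or> (\<forall>a. \<forall>\<^sub>F t in nhds (w a). f (w(a := t)) = 0)"

lemma lcont_ev:
  assumes "lcont f"
  shows "((\<lambda>t. f (w(a := t))) \<longlongrightarrow> f w) (nhds (w a))"
proof -
  have "isCont (\<lambda>t. f (w(a := t))) (w a)" using assms unfolding lcont_def by blast
  then have "((\<lambda>t. f (w(a := t))) \<longlongrightarrow> f (w(a := w a))) (at (w a))"
    by (simp add: isCont_def)
  then show ?thesis by (simp add: tendsto_nhds_iff)
qed

lemma zstable_sign:
  assumes "lcont f" "zstable f w"
  shows "\<forall>\<^sub>F t in nhds (w a). (f (w(a := t)) > 0) = (f w > 0)"
proof -
  note T = lcont_ev[OF assms(1), of w a]
  consider "f w > 0" | "f w < 0" | "f w = 0" by linarith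
  then show ?thesis
  proof cases
    case 1
    then show ?thesis using order_tendstoD(1)[OF T 1] by (auto elim: eventually_mono)
  next
    case 2
    then show ?thesis using order_tendstoD(2)[OF T 2] by (auto elim: eventually_mono)
  next
    case 3
    then have "\<forall>\<^sub>F t in nhds (w a). f (w(a := t)) = 0" using assms(2) unfolding zstable_def by blast
    then show ?thesis using 3 by (auto elim: eventually_mono)
  qed
qed

lemma zstable_relu:
  assumes "lcont f" "zstable f w"
  shows "zstable (\<lambda>w. c * relu (f w)) w"
proof (cases "c * relu (f w) = 0")
  case False
  then show ?thesis unfolding zstable_def by simp
next
  case True
  show ?thesis unfolding zstable_def
  proof (intro disjI2 allI)
    fix a
    show "\<forall>\<^sub>F t in nhds (w a). c * relu (f (w(a := t))) = 0"
    proof (cases "c = 0")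
      case True then show ?thesis by simp
    next
      case False
      then have "f w \<le> 0" using True by (auto simp: relu_def)
      have "\<forall>\<^sub>F t in nhds (w a). (f (w(a := t)) > 0) = (f w > 0)" by (rule zstable_sign[OF assms])
      then show ?thesis by (rule eventually_mono) (use \<open>f w \<le> 0\<close> in \<open>simp add: relu_def\<close>)
    qed
  qed
qed

lemma zstable_nz: "f w \<noteq> 0 \<Longrightarrow> zstable f w"
  unfolding zstable_def by simp

lemma zstable_sum:
  assumes fin: "finite J" and z: "\<And>j. j \<in> J \<Longrightarrow> u j w = 0"
    and s: "\<And>j. j \<in> J \<Longrightarrow> zstable (u j) w"
  shows "zstable (\<lambda>w. c * (\<Sum>j\<in>J. g j w * u j w)) w"
  unfolding zstable_def
proof (intro disjI2 allI)
  fix a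
  have "\<forall>\<^sub>F t in nhds (w a). \<forall>j\<in>J. u j (w(a := t)) = 0"
  proof (subst eventually_ball_finite_distrib[OF fin], intro ballI)
    fix j assume "j \<in> J"
    then show "\<forall>\<^sub>F t in nhds (w a). u j (w(a := t)) = 0" using s z unfolding zstable_def by blast
  qed
  then show "\<forall>\<^sub>F t in nhds (w a). c * (\<Sum>j\<in>J. g j (w(a := t)) * u j (w(a := t))) = 0"
    by (rule eventually_mono) simp
qed

lemma assemble:
  fixes act :: "(widx \<Rightarrow> real) \<Rightarrow> node \<Rightarrow> bool"
  assumes fin: "finite E" and rk: "\<And>e. e \<in> E \<Longrightarrow> rnk (fst e) < (rnk (tgt e) :: nat)"
    and Fdef: "\<And>w'. F w' = PS E ins xi (act w') w' out"
    and ae: "AE w in Pi\<^sub>M I (\<lambda>_. lborel). \<forall>a. \<forall>v\<in>tgt ` E. \<forall>\<^sub>F t in nhds (w a). act (w(a := t)) v = act w v"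
  shows "partials_agree_ae I F (\<lambda>w. path_fk E ins out xi (act w) w k) k"
  unfolding partials_agree_ae_def
  using ae
proof eventually_elim
  case (elim w)
  show ?case
  proof (intro ballI impI)
    fix a assume "a \<in> I" "fst a = k"
    have "\<forall>\<^sub>F t in nhds (w a). \<forall>v\<in>tgt ` E. act (w(a := t)) v = act w v"
    proof (subst eventually_ball_finite_distrib, use fin in simp, intro ballI)
      fix v assume "v \<in> tgt ` E"
      then show "\<forall>\<^sub>F t in nhds (w a). act (w(a := t)) v = act w v" using elim by blast
    qed
    from deriv_generic[OF fin rk Fdef \<open>fst a = k\<close> this]
    show "\<exists>D. ((\<lambda>t. F (w(a := t))) has_real_derivative D) (at (w a)) \<and>
        ((\<lambda>t. path_fk E ins out xi (act (w(a := t))) (w(a := t)) k) has_real_derivative D) (at (w a))" .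
  qed
qed




lemma finite_by_map:
  assumes "finite I" "\<And>e. e \<in> E \<Longrightarrow> g e \<in> I \<and> e = f (g e)"
  shows "finite E"
proof -
  have "E \<subseteq> f ` I" using assms(2) by (metis image_eqI subsetI)
  then show ?thesis using assms(1) finite_subset by blast
qed

context
  fixes d :: nat and n :: "nat \<Rightarrow> nat" and L dout :: nat and x :: "nat \<Rightarrow> real"
begin

definition vN where "vN = Max (insert d (insert dout (n ` {..L})))"

lemma vN_ge: "d \<le> vN" "dout \<le> vN" "l \<le> L \<Longrightarrow> n l \<le> vN"
  unfolding vN_def by (rule Max_ge; simp)+

lemma van_idx_finite: "finite (van_idx d n L dout)"
proof -
  have "van_idx d n L dout \<subseteq> (insert BIn (insert BOut ((\<lambda>l. BMid l 0) ` {..L}))) \<times> {..vN} \<times> {..vN}"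
  proof
    fix a assume "a \<in> van_idx d n L dout"
    then consider (a) i j where "a = (BIn, i, j)" "i < n 0" "j < d"
      | (b) l i j where "a = (BMid l 0, i, j)" "1 \<le> l" "l \<le> L" "i < n l" "j < n (l - 1)"
      | (c) r j where "a = (BOut, r, j)" "r < dout" "j < n L"
      unfolding van_idx_def by blast
    then show "a \<in> (insert BIn (insert BOut ((\<lambda>l. BMid l 0) ` {..L}))) \<times> {..vN} \<times> {..vN}"
    proof cases
      case a then show ?thesis using vN_ge(1) vN_ge(3)[of 0] by auto
    next
      case b
      then have "n (l - 1) \<le> vN" using vN_ge(3)[of "l - 1"] by simp
      then show ?thesis using b vN_ge(3)[of l] by auto
    next
      case c then show ?thesis using vN_ge(2) vN_ge(3)[of L] by auto
    qed
  qed
  then show ?thesis by (rule finite_subset) auto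
qed

definition vedge :: "widx \<Rightarrow> edge" where
  "vedge a = (case a of
      (BIn, i, j) \<Rightarrow> (NIn j, N 0 0 i, 1 / sqrt (real (n 0)), Some (BIn, i, j))
    | (BMid l h, i, j) \<Rightarrow> (N (l - 1) 0 j, N l 0 i, (if l - 1 = 0 then 1 else sqrt 2) / sqrt (real (n (l - 1))),
        Some (BMid l h, i, j))
    | (BOut, r, j) \<Rightarrow> (N L 0 j, NOut r, (if L = 0 then 1 else sqrt 2) / sqrt (real (n L)), Some (BOut, r, j)))"

lemma van_edges_finite: "finite (van_edges d n L dout)"
  by (rule finite_by_map[OF van_idx_finite, where g = "\<lambda>e. the (snd (snd (snd e)))" and f = vedge])
     (auto simp: van_edges_def van_idx_def vedge_def)

definition vrk :: "node \<Rightarrow> nat" where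
  "vrk v = (case v of NIn _ \<Rightarrow> 0 | N l h i \<Rightarrow> l + 1 | NOut _ \<Rightarrow> L + 2)"

lemma van_rk: "e \<in> van_edges d n L dout \<Longrightarrow> vrk (fst e) < vrk (tgt e)"
  by (auto simp: van_edges_def vrk_def tgt_def)

lemma van_tgt_NIn: "{e \<in> van_edges d n L dout. tgt e = NIn j} = {}"
  by (auto simp: van_edges_def tgt_def)

lemma van_tgt_N0: "i < n 0 \<Longrightarrow> {e \<in> van_edges d n L dout. tgt e = N 0 0 i}
   = (\<lambda>j. (NIn j, N 0 0 i, 1 / sqrt (real (n 0)), Some (BIn, i, j))) ` {..<d}"
  by (auto simp: van_edges_def tgt_def)

lemma van_tgt_Nl: "1 \<le> l \<Longrightarrow> l \<le> L \<Longrightarrow> i < n l \<Longrightarrow> {e \<in> van_edges d n L dout. tgt e = N l 0 i}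
   = (\<lambda>j. (N (l - 1) 0 j, N l 0 i, (if l - 1 = 0 then 1 else sqrt 2) / sqrt (real (n (l - 1))),
        Some (BMid l 0, i, j))) ` {..<n (l - 1)}"
  apply (auto simp: van_edges_def tgt_def)
  apply (rule_tac x=l in exI; auto)+
  done

lemma van_tgt_Out: "r < dout \<Longrightarrow> {e \<in> van_edges d n L dout. tgt e = NOut r}
   = (\<lambda>j. (N L 0 j, NOut r, (if L = 0 then 1 else sqrt 2) / sqrt (real (n L)), Some (BOut, r, j))) ` {..<n L}"
  by (auto simp: van_edges_def tgt_def)


abbreviation vPS where
  "vPS w v \<equiv> PS (van_edges d n L dout) (in_nodes d) (xin x) (van_act d n x w) w v"

lemma vPS_rec: "vPS w v = (\<Sum>e\<in>{e\<in>van_edges d n L dout. tgt e = v}. efac (van_act d n x w) w e *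
            ((if fst e \<in> in_nodes d then xin x (fst e) else 0) + vPS w (fst e)))"
  by (rule PS_rec[OF van_edges_finite]) (rule van_rk)

lemma vPS_NIn: "vPS w (NIn j) = 0"
  by (subst vPS_rec) (simp add: van_tgt_NIn)

lemma van_y_Suc: "van_y d n x w (Suc l) i = sqrt 2 * relu (van_s d n x w (Suc l) i)"
  by (simp add: van_s_def)

lemma relu_ind: "(if s > 0 then 1 else 0) * s = relu s"
  by (simp add: relu_def)

lemma vPS_N: "l \<le> L \<Longrightarrow> i < n l \<Longrightarrow>
   vPS w (N l 0 i) = (if l = 0 then van_y d n x w 0 i else relu (van_s d n x w l i))"
proof (induction l arbitrary: i)
  case 0
  have inj: "inj_on (\<lambda>j. (NIn j, N 0 0 i, 1 / sqrt (real (n 0)), Some (BIn, i, j))) {..<d}"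
    by (auto intro: inj_onI)
  show ?case
    apply (subst vPS_rec)
    apply (subst van_tgt_N0[OF 0(2)])
    apply (subst sum.reindex[OF inj])
    apply (simp only: o_def fst_conv vPS_NIn)
    apply (simp add: efac_def van_act_def in_nodes_def xin_def sum_distrib_left mult.assoc)
    done
next
  case (Suc l)
  have inj: "inj_on (\<lambda>j. (N l 0 j, N (Suc l) 0 i, (if l = 0 then 1 else sqrt 2) / sqrt (real (n l)),
        Some (BMid (Suc l) 0, i, j))) {..<n l}"
    by (auto intro: inj_onI)
  have IH: "j < n l \<Longrightarrow> (if l = 0 then 1 else sqrt 2) / sqrt (real (n l)) * vPS w (N l 0 j)
      = (1 / sqrt (real (n l))) * van_y d n x w l j" for j
    using Suc.IH[of j] Suc.prems by (cases l) (auto simp: van_s_def)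
  have "vPS w (N (Suc l) 0 i) = (\<Sum>j<n l. (if l = 0 then 1 else sqrt 2) / sqrt (real (n l)) *
      w (BMid (Suc l) 0, i, j) * (if van_s d n x w (Suc l) i > 0 then 1 else 0) * vPS w (N l 0 j))"
    apply (subst vPS_rec)
    apply (subst van_tgt_Nl)
    using Suc.prems apply auto[3]
    apply (simp only: diff_Suc_1)
    apply (subst sum.reindex[OF inj])
    apply (simp add: efac_def van_act_def in_nodes_def)
    done
  also have "\<dots> = (if van_s d n x w (Suc l) i > 0 then 1 else 0) *
      (\<Sum>j<n l. w (BMid (Suc l) 0, i, j) * ((if l = 0 then 1 else sqrt 2) / sqrt (real (n l)) * vPS w (N l 0 j)))"
    by (simp add: sum_distrib_left mult_ac)
  also have "\<dots> = (if van_s d n x w (Suc l) i > 0 then 1 else 0) *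
      (\<Sum>j<n l. w (BMid (Suc l) 0, i, j) * ((1 / sqrt (real (n l))) * van_y d n x w l j))"
    using IH by simp
  also have "\<dots> = (if van_s d n x w (Suc l) i > 0 then 1 else 0) * van_s d n x w (Suc l) i"
    by (simp add: van_s_def sum_distrib_left mult_ac)
  finally show ?case by (simp add: relu_ind)
qed

lemma van_F: "r < dout \<Longrightarrow> van_f d n L x w r = vPS w (NOut r)"
proof -
  assume r: "r < dout"
  have inj: "inj_on (\<lambda>j. (N L 0 j, NOut r, (if L = 0 then 1 else sqrt 2) / sqrt (real (n L)), Some (BOut, r, j))) {..<n L}"
    by (auto intro: inj_onI)
  have IH: "j < n L \<Longrightarrow> (if L = 0 then 1 else sqrt 2) / sqrt (real (n L)) * vPS w (N L 0 j)
      = (1 / sqrt (real (n L))) * van_y d n x w L j" for j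
    using vPS_N[of L j] by (cases L) (auto simp: van_s_def)
  have "vPS w (NOut r) = (\<Sum>j<n L. w (BOut, r, j) * ((if L = 0 then 1 else sqrt 2) / sqrt (real (n L)) * vPS w (N L 0 j)))"
    apply (subst vPS_rec)
    apply (subst van_tgt_Out[OF r])
    apply (subst sum.reindex[OF inj])
    apply (simp add: efac_def van_act_def in_nodes_def mult_ac)
    done
  also have "\<dots> = van_f d n L x w r"
    using IH by (simp add: van_f_def sum_distrib_left mult_ac)
  finally show ?thesis by simp
qed


lemma van_y_indep: "fst a \<notin> insert BIn ((\<lambda>l'. BMid l' 0) ` {..l}) \<Longrightarrow>
    van_y d n x (w(a := t)) l = van_y d n x w l"
proof (induction l)
  case 0
  then show ?case by (auto intro!: ext sum.cong)
next
  case (Suc l)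
  have IH: "van_y d n x (w(a := t)) l = van_y d n x w l" using Suc.prems by (intro Suc.IH) auto
  have "\<And>i j. a \<noteq> (BMid (Suc l) 0, i, j)" using Suc.prems by auto
  then have "\<And>i j. (w(a := t)) (BMid (Suc l) 0, i, j) = w (BMid (Suc l) 0, i, j)" by (metis fun_upd_other)
  then show ?case by (simp only: van_y.simps IH)
qed

lemma van_y_meas[measurable]: "(\<lambda>w. van_y d n x w l i) \<in> borel_measurable (Pi\<^sub>M I (\<lambda>_. lborel))"
  by (induction l arbitrary: i) simp_all

lemma van_s_meas[measurable]: "(\<lambda>w. van_s d n x w l i) \<in> borel_measurable (Pi\<^sub>M I (\<lambda>_. lborel))"
  unfolding van_s_def by measurable

lemma van_y_lcont: "lcont (\<lambda>w. van_y d n x w l i)"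
  by (induction l arbitrary: i) (auto intro!: lcont_intros)

lemma van_s_lcont: "lcont (\<lambda>w. van_s d n x w l i)"
  unfolding van_s_def by (auto intro!: lcont_intros van_y_lcont)


abbreviation "vM \<equiv> Pi\<^sub>M (van_idx d n L dout) (\<lambda>_. lborel :: real measure)"

lemma van_base:
  assumes x: "\<exists>j<d. x j \<noteq> 0" and n0: "0 < n 0"
  shows "AE w in vM. \<exists>j<n 0. van_y d n x w 0 j \<noteq> 0"
proof -
  have "AE w in vM. (\<forall>j\<in>{..<d}. (\<lambda>w. x j) w = 0) \<or> (\<lambda>w. 0) w + (\<Sum>j\<in>{..<d}. w (BIn, 0, j) * (\<lambda>w. x j) w) \<noteq> 0"
    by (rule lin_null[OF van_idx_finite]) (auto intro: inj_onI simp: van_idx_def n0)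
  then show ?thesis
  proof eventually_elim
    case (elim w)
    then have "(\<Sum>j<d. w (BIn, 0, j) * x j) \<noteq> 0" using x by auto
    then have "van_y d n x w 0 0 \<noteq> 0" using n0 by simp
    then show ?case using n0 by blast
  qed
qed

lemma van_step:
  assumes l: "Suc l \<le> L" and npos: "\<forall>l\<le>L. 0 < n l"
  shows "AE w in vM. (\<exists>j<n 0. van_y d n x w 0 j \<noteq> 0) \<longrightarrow>
            (\<forall>i<n l. 1 \<le> l \<longrightarrow> zstable (\<lambda>w. van_s d n x w l i) w) \<longrightarrow>
            (\<forall>i<n (Suc l). zstable (\<lambda>w. van_s d n x w (Suc l) i) w)"
proof -
  have nl: "0 < n l" using npos l by auto
  have "AE w in vM. \<forall>i\<in>{..<n (Suc l)}. (\<exists>j<n 0. van_y d n x w 0 j \<noteq> 0) \<longrightarrow>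
            (\<forall>i<n l. 1 \<le> l \<longrightarrow> zstable (\<lambda>w. van_s d n x w l i) w) \<longrightarrow>
            zstable (\<lambda>w. van_s d n x w (Suc l) i) w"
  proof (subst AE_finite_all, simp, intro ballI)
    fix i assume i: "i \<in> {..<n (Suc l)}"
    have "AE w in vM. (\<forall>j\<in>{..<n l}. (\<lambda>w. van_y d n x w l j) w = 0) \<or>
        (\<lambda>w. 0) w + (\<Sum>j\<in>{..<n l}. w (BMid (Suc l) 0, i, j) * (\<lambda>w. van_y d n x w l j) w) \<noteq> 0"
    proof (rule lin_null[OF van_idx_finite])
      show "(\<lambda>j. (BMid (Suc l) 0, i, j)) ` {..<n l} \<subseteq> van_idx d n L dout"
        using i l by (auto simp: van_idx_def)
      fix j j' :: nat and w :: "widx \<Rightarrow> real" and t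
      show "van_y d n x (w((BMid (Suc l) 0, i, j') := t)) l j = van_y d n x w l j"
        by (subst van_y_indep) auto
    qed (auto intro: inj_onI)
    then show "AE w in vM. (\<exists>j<n 0. van_y d n x w 0 j \<noteq> 0) \<longrightarrow>
            (\<forall>i<n l. 1 \<le> l \<longrightarrow> zstable (\<lambda>w. van_s d n x w l i) w) \<longrightarrow>
            zstable (\<lambda>w. van_s d n x w (Suc l) i) w"
    proof eventually_elim
      case (elim w)
      have sdef: "(\<lambda>w. van_s d n x w (Suc l) i)
          = (\<lambda>w. (1 / sqrt (real (n l))) * (\<Sum>j\<in>{..<n l}. w (BMid (Suc l) 0, i, j) * van_y d n x w l j))"
        by (simp add: van_s_def)
      show ?case
      proof (intro impI)
        assume base: "\<exists>j<n 0. van_y d n x w 0 j \<noteq> 0"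
          and prev: "\<forall>i<n l. 1 \<le> l \<longrightarrow> zstable (\<lambda>w. van_s d n x w l i) w"
        show "zstable (\<lambda>w. van_s d n x w (Suc l) i) w"
        proof (cases "\<forall>j\<in>{..<n l}. van_y d n x w l j = 0")
          case False
          then have "(\<Sum>j\<in>{..<n l}. w (BMid (Suc l) 0, i, j) * van_y d n x w l j) \<noteq> 0"
            using elim by auto
          then show ?thesis unfolding sdef using nl by (intro zstable_nz) simp
        next
          case True
          then obtain l' where l': "l = Suc l'" using base by (cases l) auto
          have "zstable (\<lambda>w. van_y d n x w l j) w" if "j \<in> {..<n l}" for j
          proof -
            have "zstable (\<lambda>w. sqrt 2 * relu (van_s d n x w l j)) w"
              using prev that l' by (intro zstable_relu van_s_lcont) auto
            then show ?thesis unfolding l' van_y_Suc .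
          qed
          then show ?thesis unfolding sdef using True by (intro zstable_sum) auto
        qed
      qed
    qed
  qed
  then show ?thesis by eventually_elim blast
qed

lemma van_claim:
  assumes x: "\<exists>j<d. x j \<noteq> 0" and npos: "\<forall>l\<le>L. 0 < n l"
  shows "l \<le> L \<Longrightarrow> AE w in vM. \<forall>l'. 1 \<le> l' \<and> l' \<le> l \<longrightarrow> (\<forall>i<n l'. zstable (\<lambda>w. van_s d n x w l' i) w)"
proof (induction l)
  case 0
  then show ?case by simp
next
  case (Suc l)
  have B: "AE w in vM. \<exists>j<n 0. van_y d n x w 0 j \<noteq> 0" using van_base x npos by auto
  have IH: "AE w in vM. \<forall>l'. 1 \<le> l' \<and> l' \<le> l \<longrightarrow> (\<forall>i<n l'. zstable (\<lambda>w. van_s d n x w l' i) w)"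
    using Suc.IH Suc.prems by simp
  from B IH van_step[OF Suc.prems npos]
  show ?case
  proof eventually_elim
    case (elim w)
    show ?case
    proof (rule allI, rule impI)
      fix l' assume "1 \<le> l' \<and> l' \<le> Suc l"
      then consider "1 \<le> l' \<and> l' \<le> l" | "l' = Suc l" by linarith
      then show "\<forall>i<n l'. zstable (\<lambda>w. van_s d n x w l' i) w"
      proof cases
        case 1 then show ?thesis using elim by auto
      next
        case 2 then show ?thesis using elim Suc.prems by auto
      qed
    qed
  qed
qed

lemma van_tgts: "v \<in> tgt ` van_edges d n L dout \<Longrightarrow>
    (\<exists>l i. v = N l 0 i \<and> l \<le> L \<and> i < n l) \<or> (\<exists>r. v = NOut r)"
  by (auto simp: van_edges_def tgt_def)

theorem van_main:
  assumes x: "\<exists>j<d. x j \<noteq> 0" and npos: "\<forall>l\<le>L. 0 < n l" and r: "r < dout"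
  shows "partials_agree_ae (van_idx d n L dout)
              (\<lambda>w. van_f d n L x w r)
              (\<lambda>w. path_fk (van_edges d n L dout) (in_nodes d) (NOut r) (xin x) (van_act d n x w) w k)
              k"
proof (rule assemble[OF van_edges_finite van_rk])
  show "\<And>w'. van_f d n L x w' r = vPS w' (NOut r)" using van_F[OF r] .
  show "AE w in vM. \<forall>a. \<forall>v\<in>tgt ` van_edges d n L dout. \<forall>\<^sub>F t in nhds (w a).
          van_act d n x (w(a := t)) v = van_act d n x w v"
    using van_claim[OF x npos order.refl]
  proof eventually_elim
    case (elim w)
    show ?case
    proof (intro allI ballI)
      fix a v assume "v \<in> tgt ` van_edges d n L dout"
      then consider (a) l i where "v = N l 0 i" "l \<le> L" "i < n l" | (b) r where "v = NOut r"
        using van_tgts by blast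
      then show "\<forall>\<^sub>F t in nhds (w a). van_act d n x (w(a := t)) v = van_act d n x w v"
      proof cases
        case a
        show ?thesis
        proof (cases "l = 0")
          case True then show ?thesis using a by (simp add: van_act_def)
        next
          case False
          then have "zstable (\<lambda>w. van_s d n x w l i) w" using elim a by auto
          from zstable_sign[OF van_s_lcont this, of a]
          show ?thesis using a False by (simp add: van_act_def)
        qed
      next
        case b then show ?thesis by (simp add: van_act_def)
      qed
    qed
  qed
qed

end



locale resctx =
  fixes d n :: nat and nh :: "nat \<Rightarrow> nat \<Rightarrow> nat" and m L :: nat and \<alpha> :: "nat \<Rightarrow> real"
    and dout :: nat and x :: "nat \<Rightarrow> real"
begin

definition rN where "rN = Max (insert d (insert dout (insert n ((\<lambda>(l, h). nh l h) ` ({..L} \<times> {..m})))))"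

lemma rN_ge: "d \<le> rN" "dout \<le> rN" "n \<le> rN" "l \<le> L \<Longrightarrow> h \<le> m \<Longrightarrow> rdim n nh m l h \<le> rN"
  unfolding rN_def rdim_def by (rule Max_ge; force)+

lemma res_idx_finite: "finite (res_idx d n nh m L dout)"
proof -
  have "res_idx d n nh m L dout \<subseteq> (insert BIn (insert BOut ((\<lambda>(l, h). BMid l h) ` ({..L} \<times> {..m})))) \<times> {..rN} \<times> {..rN}"
  proof
    fix a assume "a \<in> res_idx d n nh m L dout"
    then consider (a) i j where "a = (BIn, i, j)" "i < n" "j < d"
      | (b) l h i j where "a = (BMid l h, i, j)" "1 \<le> l" "l \<le> L" "1 \<le> h" "h \<le> m"
          "i < rdim n nh m l h" "j < rdim n nh m l (h - 1)"
      | (c) r j where "a = (BOut, r, j)" "r < dout" "j < n"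
      unfolding res_idx_def by blast
    then show "a \<in> (insert BIn (insert BOut ((\<lambda>(l, h). BMid l h) ` ({..L} \<times> {..m})))) \<times> {..rN} \<times> {..rN}"
    proof cases
      case a then show ?thesis using rN_ge(1,3) by auto
    next
      case b
      then have "rdim n nh m l h \<le> rN" "rdim n nh m l (h - 1) \<le> rN" using rN_ge(4) by auto
      then show ?thesis using b by auto
    next
      case c then show ?thesis using rN_ge(2,3) by auto
    qed
  qed
  then show ?thesis by (rule finite_subset) auto
qed

definition redge :: "widx \<Rightarrow> edge" where
  "redge a = (case a of
      (BIn, i, j) \<Rightarrow> (NIn j, N 0 0 i, 1 / sqrt (real n), Some (BIn, i, j))
    | (BMid l h, i, j) \<Rightarrow> (if h = 1 then N (l - 1) 0 j else N l (h - 1) j, N l h i,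
        (if h = 1 then 1 else sqrt 2) / sqrt (real (rdim n nh m l (h - 1))), Some (BMid l h, i, j))
    | (BOut, r, j) \<Rightarrow> (N L 0 j, NOut r, 1 / sqrt (real n), Some (BOut, r, j)))"

definition skip_of :: "edge \<Rightarrow> nat \<times> nat" where
  "skip_of e = (case tgt e of N l h i \<Rightarrow> (l, i) | _ \<Rightarrow> (0, 0))"

lemma res_edges_finite: "finite (res_edges d n nh m L \<alpha> dout)"
proof -
  have f1: "finite {(NIn j, N 0 0 i, 1 / sqrt (real n), Some (BIn, i, j)) |i j. i < n \<and> j < d}"
    by (rule finite_by_map[OF res_idx_finite, where g = "\<lambda>e. the (snd (snd (snd e)))" and f = redge])
       (auto simp: res_idx_def redge_def)
  have f2: "finite {(if h = 1 then N (l - 1) 0 j else N l (h - 1) j, N l h i,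
        (if h = 1 then 1 else sqrt 2) / sqrt (real (rdim n nh m l (h - 1))), Some (BMid l h, i, j))
        |l h i j. 1 \<le> l \<and> l \<le> L \<and> 1 \<le> h \<and> h \<le> m
          \<and> i < rdim n nh m l h \<and> j < rdim n nh m l (h - 1)}"
    by (rule finite_by_map[OF res_idx_finite, where g = "\<lambda>e. the (snd (snd (snd e)))" and f = redge])
       (auto simp: res_idx_def redge_def)
  have f3: "finite {(N (l - 1) 0 i, N l 0 i, 1, None) |l i. 1 \<le> l \<and> l \<le> L \<and> i < n}"
    by (rule finite_by_map[where I = "{..L} \<times> {..<n}" and g = "\<lambda>e. case fst (snd e) of N l h i \<Rightarrow> (l, i) | _ \<Rightarrow> (0::nat, 0::nat)" and f = "\<lambda>(l, i). (N (l - 1) 0 i, N l 0 i, 1, None)"])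
       (auto simp: skip_of_def tgt_def)
  have f4: "finite {(N l m i, N l 0 i, sqrt (\<alpha> l), None) |l i. 1 \<le> l \<and> l \<le> L \<and> i < n}"
    by (rule finite_by_map[where I = "{..L} \<times> {..<n}" and g = "\<lambda>e. case fst (snd e) of N l h i \<Rightarrow> (l, i) | _ \<Rightarrow> (0::nat, 0::nat)" and f = "\<lambda>(l, i). (N l m i, N l 0 i, sqrt (\<alpha> l), None)"])
       (auto simp: skip_of_def tgt_def)
  have f5: "finite {(N L 0 j, NOut r, 1 / sqrt (real n), Some (BOut, r, j)) |r j. r < dout \<and> j < n}"
    by (rule finite_by_map[OF res_idx_finite, where g = "\<lambda>e. the (snd (snd (snd e)))" and f = redge])
       (auto simp: res_idx_def redge_def)
  show ?thesis unfolding res_edges_def using f1 f2 f3 f4 f5 by simp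
qed

definition rrk :: "node \<Rightarrow> nat" where
  "rrk v = (case v of NIn _ \<Rightarrow> 0 | N l h i \<Rightarrow> l * (m + 2) + (if h = 0 then m + 1 else h) + 1
     | NOut _ \<Rightarrow> (L + 1) * (m + 2) + 1)"

lemma rrk_aux: "1 \<le> l \<Longrightarrow> (l - 1) * (m + 2) + (m + 2) = l * (m + 2)"
  by (cases l) auto

lemma res_rk: "1 \<le> m \<Longrightarrow> e \<in> res_edges d n nh m L \<alpha> dout \<Longrightarrow> rrk (fst e) < rrk (tgt e)"
  unfolding res_edges_def rrk_def tgt_def
  using rrk_aux by (auto simp: algebra_simps)


lemma res_tgt_NIn: "{e \<in> res_edges d n nh m L \<alpha> dout. tgt e = NIn j} = {}"
  by (auto simp: res_edges_def tgt_def)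

lemma res_tgt_N0: "i < n \<Longrightarrow> {e \<in> res_edges d n nh m L \<alpha> dout. tgt e = N 0 0 i}
   = (\<lambda>j. (NIn j, N 0 0 i, 1 / sqrt (real n), Some (BIn, i, j))) ` {..<d}"
  by (auto simp: res_edges_def tgt_def)

lemma res_tgt_Nl0: "1 \<le> l \<Longrightarrow> l \<le> L \<Longrightarrow> i < n \<Longrightarrow> {e \<in> res_edges d n nh m L \<alpha> dout. tgt e = N l 0 i}
   = {(N (l - 1) 0 i, N l 0 i, 1, None), (N l m i, N l 0 i, sqrt (\<alpha> l), None)}"
  by (auto simp: res_edges_def tgt_def)

lemma res_tgt_Nlh:
  assumes H: "1 \<le> l" "l \<le> L" "1 \<le> h" "h \<le> m" "i < rdim n nh m l h"
  shows "{e \<in> res_edges d n nh m L \<alpha> dout. tgt e = N l h i}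
   = (\<lambda>j. (if h = 1 then N (l - 1) 0 j else N l (h - 1) j, N l h i,
        (if h = 1 then 1 else sqrt 2) / sqrt (real (rdim n nh m l (h - 1))), Some (BMid l h, i, j)))
      ` {..<rdim n nh m l (h - 1)}"
  (is "?A = ?B")
proof
  show "?A \<subseteq> ?B" using H by (auto simp: res_edges_def tgt_def)
next
  show "?B \<subseteq> ?A"
  proof
    fix e assume "e \<in> ?B"
    then obtain j where j: "j < rdim n nh m l (h - 1)" and e: "e = (if h = 1 then N (l - 1) 0 j else N l (h - 1) j, N l h i,
        (if h = 1 then 1 else sqrt 2) / sqrt (real (rdim n nh m l (h - 1))), Some (BMid l h, i, j))" by auto
    have "e \<in> {(if h = 1 then N (l - 1) 0 j else N l (h - 1) j, N l h i,
        (if h = 1 then 1 else sqrt 2) / sqrt (real (rdim n nh m l (h - 1))), Some (BMid l h, i, j))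
        |l h i j. 1 \<le> l \<and> l \<le> L \<and> 1 \<le> h \<and> h \<le> m
          \<and> i < rdim n nh m l h \<and> j < rdim n nh m l (h - 1)}"
      using H j e by blast
    then show "e \<in> ?A" using e by (simp add: res_edges_def tgt_def)
  qed
qed

lemma res_tgt_Out: "r < dout \<Longrightarrow> {e \<in> res_edges d n nh m L \<alpha> dout. tgt e = NOut r}
   = (\<lambda>j. (N L 0 j, NOut r, 1 / sqrt (real n), Some (BOut, r, j))) ` {..<n}"
  by (auto simp: res_edges_def tgt_def)


abbreviation rPS where
  "rPS w v \<equiv> PS (res_edges d n nh m L \<alpha> dout) (in_nodes d) (xin x) (res_act d n nh m \<alpha> x w) w v"

lemma rPS_rec: "1 \<le> m \<Longrightarrow> rPS w v = (\<Sum>e\<in>{e\<in>res_edges d n nh m L \<alpha> dout. tgt e = v}. efac (res_act d n nh m \<alpha> x w) w e *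
            ((if fst e \<in> in_nodes d then xin x (fst e) else 0) + rPS w (fst e)))"
  by (rule PS_rec[OF res_edges_finite]) (rule res_rk)

lemma rPS_NIn: "1 \<le> m \<Longrightarrow> rPS w (NIn j) = 0"
  by (subst rPS_rec) (simp_all add: res_tgt_NIn)

definition rin where
  "rin w l yp h j = (if h = 1 then yp j else sqrt 2 * relu (res_inner n nh m w l yp (h - 1) j))"

lemma res_inner_pos: "1 \<le> h \<Longrightarrow> res_inner n nh m w l yp h i =
   (1 / sqrt (real (rdim n nh m l (h - 1)))) * (\<Sum>j<rdim n nh m l (h - 1). w (BMid l h, i, j) * rin w l yp h j)"
proof (cases h)
  case (Suc h0)
  then show ?thesis by (cases h0) (simp_all add: rin_def rdim_def)
qed simp

lemma rPS_Nlh: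
  assumes m: "1 \<le> m" and l: "1 \<le> l" "l \<le> L"
    and prev: "\<And>j. j < n \<Longrightarrow> rPS w (N (l - 1) 0 j) = res_y d n nh m \<alpha> x w (l - 1) j"
  shows "1 \<le> h \<Longrightarrow> h \<le> m \<Longrightarrow> i < rdim n nh m l h \<Longrightarrow> rPS w (N l h i) =
     (if h < m then relu (res_inner n nh m w l (res_y d n nh m \<alpha> x w (l - 1)) h i)
      else res_inner n nh m w l (res_y d n nh m \<alpha> x w (l - 1)) h i)"
proof (induction h arbitrary: i)
  case 0
  then show ?case by simp
next
  case (Suc h0)
  let ?yp = "res_y d n nh m \<alpha> x w (l - 1)"
  let ?s = "res_inner n nh m w l ?yp (Suc h0) i"
  let ?c = "(if Suc h0 = 1 then 1 else sqrt 2) / sqrt (real (rdim n nh m l (Suc h0 - 1)))"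
  let ?A = "(if res_act d n nh m \<alpha> x w (N l (Suc h0) i) then 1 else 0) :: real"
  have inj: "inj_on (\<lambda>j. (if Suc h0 = 1 then N (l - 1) 0 j else N l (Suc h0 - 1) j, N l (Suc h0) i,
        ?c, Some (BMid l (Suc h0), i, j))) {..<rdim n nh m l (Suc h0 - 1)}"
    by (auto intro: inj_onI)
  have src: "?c * rPS w (if Suc h0 = 1 then N (l - 1) 0 j else N l (Suc h0 - 1) j)
      = (1 / sqrt (real (rdim n nh m l (Suc h0 - 1)))) * rin w l ?yp (Suc h0) j"
    if j: "j < rdim n nh m l (Suc h0 - 1)" for j
  proof (cases h0)
    case 0
    then have "j < n" using j by (simp add: rdim_def)
    then show ?thesis using 0 prev by (simp add: rin_def)
  next
    case (Suc h1)
    then have "rPS w (N l h0 j) = relu (res_inner n nh m w l ?yp h0 j)"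
      using Suc.IH[of j] Suc.prems j by simp
    then show ?thesis using Suc by (simp add: rin_def)
  qed
  have "rPS w (N l (Suc h0) i) = (\<Sum>j<rdim n nh m l (Suc h0 - 1).
      ?c * w (BMid l (Suc h0), i, j) * ?A * rPS w (if Suc h0 = 1 then N (l - 1) 0 j else N l (Suc h0 - 1) j))"
    apply (subst rPS_rec[OF m])
    apply (subst res_tgt_Nlh)
    using l Suc.prems apply auto[5]
    apply (subst sum.reindex[OF inj])
    apply (simp add: efac_def in_nodes_def o_def)
    done
  also have "\<dots> = ?A * (\<Sum>j<rdim n nh m l (Suc h0 - 1). w (BMid l (Suc h0), i, j) *
      (?c * rPS w (if Suc h0 = 1 then N (l - 1) 0 j else N l (Suc h0 - 1) j)))"
    by (simp add: sum_distrib_left mult_ac)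
  also have "\<dots> = ?A * ?s"
    using src by (simp add: res_inner_pos[of "Suc h0"] sum_distrib_left mult_ac)
  also have "\<dots> = (if Suc h0 < m then relu ?s else ?s)"
    by (auto simp: res_act_def relu_def)
  finally show ?case .
qed


lemma rPS_N0:
  assumes m: "1 \<le> m"
  shows "l \<le> L \<Longrightarrow> i < n \<Longrightarrow> rPS w (N l 0 i) = res_y d n nh m \<alpha> x w l i"
proof (induction l arbitrary: i)
  case 0
  have inj: "inj_on (\<lambda>j. (NIn j, N 0 0 i, 1 / sqrt (real n), Some (BIn, i, j))) {..<d}"
    by (auto intro: inj_onI)
  show ?case
    apply (subst rPS_rec[OF m])
    apply (subst res_tgt_N0[OF 0(2)])
    apply (subst sum.reindex[OF inj])
    apply (simp only: o_def fst_conv rPS_NIn[OF m])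
    apply (simp add: efac_def res_act_def in_nodes_def xin_def sum_distrib_left mult.assoc)
    done
next
  case (Suc l)
  have prev: "\<And>j. j < n \<Longrightarrow> rPS w (N (Suc l - 1) 0 j) = res_y d n nh m \<alpha> x w (Suc l - 1) j"
    using Suc by simp
  have top: "rPS w (N (Suc l) m i) = res_inner n nh m w (Suc l) (res_y d n nh m \<alpha> x w l) m i"
    using rPS_Nlh[OF m _ Suc.prems(1) prev, of m i] m Suc.prems by (simp add: rdim_def)
  have ne: "(N (Suc l - 1) 0 i, N (Suc l) 0 i, 1, None) \<noteq> (N (Suc l) m i, N (Suc l) 0 i, sqrt (\<alpha> (Suc l)), None)"
    by simp
  have "rPS w (N (Suc l) 0 i) = rPS w (N l 0 i) + sqrt (\<alpha> (Suc l)) * rPS w (N (Suc l) m i)"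
    apply (subst rPS_rec[OF m])
    apply (subst res_tgt_Nl0)
    using Suc.prems apply auto[3]
    apply (subst sum.insert)
    using ne apply auto[2]
    apply (simp add: efac_def res_act_def in_nodes_def)
    done
  then show ?case using Suc.IH[of i] Suc.prems top by simp
qed

lemma res_F:
  assumes m: "1 \<le> m" and r: "r < dout"
  shows "res_f d n nh m L \<alpha> x w r = rPS w (NOut r)"
proof -
  have inj: "inj_on (\<lambda>j. (N L 0 j, NOut r, 1 / sqrt (real n), Some (BOut, r, j))) {..<n}"
    by (auto intro: inj_onI)
  have "rPS w (NOut r) = (\<Sum>j<n. 1 / sqrt (real n) * w (BOut, r, j) * rPS w (N L 0 j))"
    apply (subst rPS_rec[OF m])
    apply (subst res_tgt_Out[OF r])
    apply (subst sum.reindex[OF inj])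
    apply (simp add: efac_def res_act_def in_nodes_def)
    done
  also have "\<dots> = res_f d n nh m L \<alpha> x w r"
    using rPS_N0[OF m order.refl] by (simp add: res_f_def sum_distrib_left mult_ac)
  finally show ?thesis by simp
qed


end



context resctx
begin

lemma res_inner_indep:
  "(\<And>h'. 1 \<le> h' \<Longrightarrow> h' \<le> h \<Longrightarrow> fst a \<noteq> BMid l h') \<Longrightarrow>
    res_inner n nh m (w(a := t)) l yp h i = res_inner n nh m w l yp h i"
proof (induction h arbitrary: i)
  case 0
  then show ?case by simp
next
  case (Suc h0)
  have IH: "\<And>j. res_inner n nh m (w(a := t)) l yp h0 j = res_inner n nh m w l yp h0 j"
    using Suc.prems by (intro Suc.IH) auto
  have ne: "\<And>i j. (w(a := t)) (BMid l (Suc h0), i, j) = w (BMid l (Suc h0), i, j)"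
  proof -
    fix i j
    have "a \<noteq> (BMid l (Suc h0), i, j)" using Suc.prems[of "Suc h0"] by auto
    then show "(w(a := t)) (BMid l (Suc h0), i, j) = w (BMid l (Suc h0), i, j)" by simp
  qed
  show ?case
    by (simp only: res_inner_pos[of "Suc h0"] rin_def IH ne le_add1 plus_1_eq_Suc diff_Suc_1)
qed

lemma res_y_indep: "fst a \<notin> insert BIn {BMid l' h |l' h. l' \<le> l} \<Longrightarrow>
    res_y d n nh m \<alpha> x (w(a := t)) l i = res_y d n nh m \<alpha> x w l i"
proof (induction l arbitrary: i)
  case 0
  then show ?case by (auto intro!: sum.cong)
next
  case (Suc l)
  have IH: "res_y d n nh m \<alpha> x (w(a := t)) l = res_y d n nh m \<alpha> x w l"
    using Suc.prems by (intro ext Suc.IH) auto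
  have "res_inner n nh m (w(a := t)) (Suc l) (res_y d n nh m \<alpha> x w l) m i
      = res_inner n nh m w (Suc l) (res_y d n nh m \<alpha> x w l) m i"
    by (rule res_inner_indep) (use Suc.prems in auto)
  then show ?case by (simp only: res_y.simps IH)
qed

lemma res_inner_meas:
  assumes "\<And>j. (\<lambda>w. Y w j) \<in> borel_measurable (Pi\<^sub>M I (\<lambda>_. lborel :: real measure))"
  shows "(\<lambda>w. res_inner n nh m w l (Y w) h i) \<in> borel_measurable (Pi\<^sub>M I (\<lambda>_. lborel))"
proof (induction h arbitrary: i)
  case 0
  then show ?case using assms by simp
next
  case (Suc h0)
  have r: "(\<lambda>w. relu (res_inner n nh m w l (Y w) h0 j)) \<in> borel_measurable (Pi\<^sub>M I (\<lambda>_. lborel))" for j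
    using measurable_compose[OF Suc.IH relu_measurable] by (simp add: o_def)
  show ?case
  proof (cases h0)
    case 0
    then show ?thesis
      by (simp del: res_inner.simps add: res_inner.simps(2))
         (intro borel_measurable_divide borel_measurable_times borel_measurable_sum borel_measurable_const meas_comp_any assms)
  next
    case (Suc h1)
    then show ?thesis using r
      by (simp del: res_inner.simps add: res_inner.simps(3))
  qed
qed

lemma res_inner_lcont:
  assumes "\<And>j. lcont (\<lambda>w. Y w j)"
  shows "lcont (\<lambda>w. res_inner n nh m w l (Y w) h i)"
proof (induction h arbitrary: i)
  case 0
  then show ?case using assms by simp
next
  case (Suc h0)
  have R: "lcont (\<lambda>w. relu (res_inner n nh m w l (Y w) h0 j))" for j
    by (intro lcont_relu Suc.IH)
  show ?case
  proof (cases h0)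
    case 0
    then show ?thesis
      by (simp del: res_inner.simps add: res_inner.simps(2))
         (intro lcont_div lcont_mult lcont_sum lcont_comp_w assms)
  next
    case (Suc h1)
    then show ?thesis using R
      by (simp del: res_inner.simps add: res_inner.simps(3))
         (intro lcont_div lcont_mult lcont_sum lcont_comp_w lcont_const; simp)
  qed
qed

lemma res_y_meas[measurable]: "(\<lambda>w. res_y d n nh m \<alpha> x w l i) \<in> borel_measurable (Pi\<^sub>M I (\<lambda>_. lborel))"
proof (induction l arbitrary: i)
  case 0
  show ?case unfolding res_y.simps
    by (intro borel_measurable_divide borel_measurable_times borel_measurable_sum borel_measurable_const meas_comp_any)
next
  case (Suc l)
  have "(\<lambda>w. res_inner n nh m w (Suc l) (res_y d n nh m \<alpha> x w l) m i) \<in> borel_measurable (Pi\<^sub>M I (\<lambda>_. lborel))"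
    by (rule res_inner_meas[OF Suc.IH])
  then show ?case
    unfolding res_y.simps by (intro borel_measurable_add borel_measurable_times borel_measurable_const Suc.IH)
qed

lemma res_y_lcont: "lcont (\<lambda>w. res_y d n nh m \<alpha> x w l i)"
proof (induction l arbitrary: i)
  case 0
  show ?case unfolding res_y.simps by (intro lcont_div lcont_mult lcont_sum lcont_comp_w lcont_const)
next
  case (Suc l)
  show ?case unfolding res_y.simps by (intro lcont_add lcont_mult lcont_const res_inner_lcont Suc.IH)
qed


lemma rin_meas:
  assumes "\<And>j. (\<lambda>w. Y w j) \<in> borel_measurable (Pi\<^sub>M I (\<lambda>_. lborel :: real measure))"
  shows "(\<lambda>w. rin w l (Y w) h j) \<in> borel_measurable (Pi\<^sub>M I (\<lambda>_. lborel))"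
proof (cases "h = 1")
  case True
  then show ?thesis unfolding rin_def using assms by simp
next
  case False
  have "(\<lambda>w. relu (res_inner n nh m w l (Y w) (h - 1) j)) \<in> borel_measurable (Pi\<^sub>M I (\<lambda>_. lborel))"
    using measurable_compose[OF res_inner_meas[OF assms] relu_measurable] by (simp add: o_def)
  then show ?thesis unfolding rin_def using False by simp
qed

lemma rin_lcont:
  assumes "\<And>j. lcont (\<lambda>w. Y w j)"
  shows "lcont (\<lambda>w. rin w l (Y w) h j)"
proof (cases "h = 1")
  case True
  then show ?thesis unfolding rin_def using assms by simp
next
  case False
  then show ?thesis unfolding rin_def
    by simp (intro lcont_mult lcont_const lcont_relu res_inner_lcont assms)
qed

lemma rin_indep:
  assumes "fst a \<notin> insert BIn {BMid l' h |l' h. l' \<le> l - 1}" "\<And>h'. 1 \<le> h' \<Longrightarrow> h' < h \<Longrightarrow> fst a \<noteq> BMid l h'"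
  shows "rin (w(a := t)) l (res_y d n nh m \<alpha> x (w(a := t)) (l - 1)) h j = rin w l (res_y d n nh m \<alpha> x w (l - 1)) h j"
proof -
  have Y: "res_y d n nh m \<alpha> x (w(a := t)) (l - 1) = res_y d n nh m \<alpha> x w (l - 1)"
    using assms(1) by (intro ext res_y_indep)
  have "res_inner n nh m (w(a := t)) l (res_y d n nh m \<alpha> x w (l - 1)) (h - 1) j
      = res_inner n nh m w l (res_y d n nh m \<alpha> x w (l - 1)) (h - 1) j"
    by (rule res_inner_indep) (use assms(2) in auto)
  then show ?thesis unfolding rin_def Y by simp
qed

abbreviation "RM \<equiv> Pi\<^sub>M (res_idx d n nh m L dout) (\<lambda>_. lborel :: real measure)"

lemma rdim_pos:
  assumes "0 < n" "\<forall>l h. 1 \<le> l \<and> l \<le> L \<and> 1 \<le> h \<and> h < m \<longrightarrow> 0 < nh l h"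
    "1 \<le> l" "l \<le> L" "h \<le> m"
  shows "0 < rdim n nh m l h"
  using assms by (auto simp: rdim_def)

lemma res_base:
  assumes x: "\<exists>j<d. x j \<noteq> 0" and n0: "0 < n"
  shows "AE w in RM. \<exists>j<n. res_y d n nh m \<alpha> x w 0 j \<noteq> 0"
proof -
  have "AE w in RM. (\<forall>j\<in>{..<d}. (\<lambda>w. x j) w = 0) \<or> (\<lambda>w. 0) w + (\<Sum>j\<in>{..<d}. w (BIn, 0, j) * (\<lambda>w. x j) w) \<noteq> 0"
    by (rule lin_null[OF res_idx_finite]) (auto intro: inj_onI simp: res_idx_def n0)
  then show ?thesis
  proof eventually_elim
    case (elim w)
    then have "(\<Sum>j<d. w (BIn, 0, j) * x j) \<noteq> 0" using x by auto
    then have "res_y d n nh m \<alpha> x w 0 0 \<noteq> 0" using n0 by simp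
    then show ?case using n0 by blast
  qed
qed


lemma res_idx_mem: "1 \<le> l \<Longrightarrow> l \<le> L \<Longrightarrow> 1 \<le> h \<Longrightarrow> h \<le> m \<Longrightarrow> i < rdim n nh m l h \<Longrightarrow>
    j < rdim n nh m l (h - 1) \<Longrightarrow> (BMid l h, i, j) \<in> res_idx d n nh m L dout"
  unfolding res_idx_def by blast

lemma res_Ystep:
  assumes l: "Suc l \<le> L" and n0: "0 < n" and m: "1 \<le> m"
    and nh: "\<forall>l h. 1 \<le> l \<and> l \<le> L \<and> 1 \<le> h \<and> h < m \<longrightarrow> 0 < nh l h"
    and \<alpha>: "\<forall>l. 1 \<le> l \<and> l \<le> L \<longrightarrow> 0 < \<alpha> l"
  shows "AE w in RM. (\<exists>i<n. res_y d n nh m \<alpha> x w l i \<noteq> 0) \<longrightarrow> (\<exists>i<n. res_y d n nh m \<alpha> x w (Suc l) i \<noteq> 0)"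
proof -
  let ?R = "rdim n nh m (Suc l) (m - 1)"
  let ?c = "sqrt (\<alpha> (Suc l)) / sqrt (real ?R)"
  have Rpos: "0 < ?R" using rdim_pos[OF n0 nh, of "Suc l" "m - 1"] l by simp
  have apos: "0 < \<alpha> (Suc l)" using \<alpha> l by auto
  have cnz: "?c \<noteq> 0" using Rpos apos by simp
  have "AE w in RM. (\<forall>j\<in>{..<?R}. (\<lambda>w. ?c * rin w (Suc l) (res_y d n nh m \<alpha> x w l) m j) w = 0) \<or>
      (\<lambda>w. res_y d n nh m \<alpha> x w l 0) w + (\<Sum>j\<in>{..<?R}. w (BMid (Suc l) m, 0, j) *
          (\<lambda>w. ?c * rin w (Suc l) (res_y d n nh m \<alpha> x w l) m j) w) \<noteq> 0"
  proof (rule lin_null[OF res_idx_finite])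
    show "(\<lambda>j. (BMid (Suc l) m, 0, j)) ` {..<?R} \<subseteq> res_idx d n nh m L dout"
    proof
      fix a :: widx assume "a \<in> (\<lambda>j. (BMid (Suc l) m, 0, j)) ` {..<?R}"
      then obtain j where "a = (BMid (Suc l) m, 0, j)" "j < ?R" by auto
      moreover have "0 < rdim n nh m (Suc l) m" using n0 by (simp add: rdim_def)
      ultimately show "a \<in> res_idx d n nh m L dout" using l m res_idx_mem[of "Suc l" m 0 j] by simp
    qed
    show "\<And>j. j \<in> {..<?R} \<Longrightarrow> (\<lambda>w. ?c * rin w (Suc l) (res_y d n nh m \<alpha> x w l) m j) \<in> borel_measurable RM"
      by (intro borel_measurable_times borel_measurable_const rin_meas res_y_meas)
    show "(\<lambda>w. res_y d n nh m \<alpha> x w l 0) \<in> borel_measurable RM" by (rule res_y_meas)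
    fix j j' :: nat and w :: "widx \<Rightarrow> real" and t
    show "res_y d n nh m \<alpha> x (w((BMid (Suc l) m, 0, j') := t)) l 0 = res_y d n nh m \<alpha> x w l 0"
      by (rule res_y_indep) auto
    show "?c * rin (w((BMid (Suc l) m, 0, j') := t)) (Suc l) (res_y d n nh m \<alpha> x (w((BMid (Suc l) m, 0, j') := t)) l) m j
        = ?c * rin w (Suc l) (res_y d n nh m \<alpha> x w l) m j"
      using rin_indep[of "(BMid (Suc l) m, 0, j')" "Suc l" m w t j] by auto
  qed (auto intro: inj_onI)
  then show ?thesis
  proof eventually_elim
    case (elim w)
    let ?Y = "res_y d n nh m \<alpha> x w l"
    have inner: "res_inner n nh m w (Suc l) ?Y m i = (1 / sqrt (real ?R)) *
        (\<Sum>j<?R. w (BMid (Suc l) m, i, j) * rin w (Suc l) ?Y m j)" for i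
      using res_inner_pos[OF m] by simp
    show ?case
    proof
      assume prev: "\<exists>i<n. ?Y i \<noteq> 0"
      show "\<exists>i<n. res_y d n nh m \<alpha> x w (Suc l) i \<noteq> 0"
      proof (cases "\<forall>j\<in>{..<?R}. ?c * rin w (Suc l) ?Y m j = 0")
        case True
        then have "\<forall>j\<in>{..<?R}. rin w (Suc l) ?Y m j = 0" using cnz by simp
        then have "res_inner n nh m w (Suc l) ?Y m i = 0" for i unfolding inner by simp
        then have eq: "res_y d n nh m \<alpha> x w (Suc l) i = ?Y i" for i by simp
        show ?thesis using prev by (simp only: eq)
      next
        case False
        then have ne: "?Y 0 + (\<Sum>j<?R. w (BMid (Suc l) m, 0, j) * (?c * rin w (Suc l) ?Y m j)) \<noteq> 0"
          using elim by auto
        have "res_y d n nh m \<alpha> x w (Suc l) 0 = ?Y 0 + (\<Sum>j<?R. w (BMid (Suc l) m, 0, j) * (?c * rin w (Suc l) ?Y m j))"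
          by (simp only: res_y.simps inner) (simp add: sum_distrib_left mult_ac)
        then show ?thesis using ne n0 by auto
      qed
    qed
  qed
qed


lemma res_Yclaim:
  assumes x: "\<exists>j<d. x j \<noteq> 0" and n0: "0 < n" and m: "1 \<le> m"
    and nh: "\<forall>l h. 1 \<le> l \<and> l \<le> L \<and> 1 \<le> h \<and> h < m \<longrightarrow> 0 < nh l h"
    and \<alpha>: "\<forall>l. 1 \<le> l \<and> l \<le> L \<longrightarrow> 0 < \<alpha> l"
  shows "l \<le> L \<Longrightarrow> AE w in RM. \<exists>i<n. res_y d n nh m \<alpha> x w l i \<noteq> 0"
proof (induction l)
  case 0
  then show ?case using res_base[OF x n0] by simp
next
  case (Suc l)
  have IH: "AE w in RM. \<exists>i<n. res_y d n nh m \<alpha> x w l i \<noteq> 0" using Suc by simp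
  from IH res_Ystep[OF Suc.prems n0 m nh \<alpha>] show ?case by eventually_elim blast
qed

abbreviation S where "S w l h i \<equiv> res_inner n nh m w l (res_y d n nh m \<alpha> x w (l - 1)) h i"

lemma S_lcont: "lcont (\<lambda>w. S w l h i)"
  by (intro res_inner_lcont res_y_lcont)

lemma res_relu_step:
  assumes l: "1 \<le> l" "l \<le> L" and h: "1 \<le> h" "h < m" and n0: "0 < n"
    and nh: "\<forall>l h. 1 \<le> l \<and> l \<le> L \<and> 1 \<le> h \<and> h < m \<longrightarrow> 0 < nh l h"
  shows "AE w in RM. (\<exists>j<n. res_y d n nh m \<alpha> x w (l - 1) j \<noteq> 0) \<longrightarrow>
      (2 \<le> h \<longrightarrow> (\<forall>j<rdim n nh m l (h - 1). zstable (\<lambda>w. S w l (h - 1) j) w)) \<longrightarrow>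
      (\<forall>i<rdim n nh m l h. zstable (\<lambda>w. S w l h i) w)"
proof -
  let ?R = "rdim n nh m l (h - 1)"
  have Rpos: "0 < ?R" using rdim_pos[OF n0 nh l, of "h - 1"] h by simp
  have "AE w in RM. \<forall>i\<in>{..<rdim n nh m l h}. (\<exists>j<n. res_y d n nh m \<alpha> x w (l - 1) j \<noteq> 0) \<longrightarrow>
      (2 \<le> h \<longrightarrow> (\<forall>j<?R. zstable (\<lambda>w. S w l (h - 1) j) w)) \<longrightarrow>
      zstable (\<lambda>w. S w l h i) w"
  proof (subst AE_finite_all, simp, intro ballI)
    fix i assume i: "i \<in> {..<rdim n nh m l h}"
    have "AE w in RM. (\<forall>j\<in>{..<?R}. (\<lambda>w. rin w l (res_y d n nh m \<alpha> x w (l - 1)) h j) w = 0) \<or>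
      (\<lambda>w. 0) w + (\<Sum>j\<in>{..<?R}. w (BMid l h, i, j) * (\<lambda>w. rin w l (res_y d n nh m \<alpha> x w (l - 1)) h j) w) \<noteq> 0"
    proof (rule lin_null[OF res_idx_finite])
      show "(\<lambda>j. (BMid l h, i, j)) ` {..<?R} \<subseteq> res_idx d n nh m L dout"
      proof
        fix a :: widx assume "a \<in> (\<lambda>j. (BMid l h, i, j)) ` {..<?R}"
        then obtain j where "a = (BMid l h, i, j)" "j < ?R" by auto
        then show "a \<in> res_idx d n nh m L dout" using l h i res_idx_mem[of l h i j] by simp
      qed
      show "\<And>j. j \<in> {..<?R} \<Longrightarrow> (\<lambda>w. rin w l (res_y d n nh m \<alpha> x w (l - 1)) h j) \<in> borel_measurable RM"
        by (intro rin_meas res_y_meas)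
      fix j j' :: nat and w :: "widx \<Rightarrow> real" and t
      show "rin (w((BMid l h, i, j') := t)) l (res_y d n nh m \<alpha> x (w((BMid l h, i, j') := t)) (l - 1)) h j
          = rin w l (res_y d n nh m \<alpha> x w (l - 1)) h j"
        by (rule rin_indep) (use l in auto)
    qed (auto intro: inj_onI)
    then show "AE w in RM. (\<exists>j<n. res_y d n nh m \<alpha> x w (l - 1) j \<noteq> 0) \<longrightarrow>
      (2 \<le> h \<longrightarrow> (\<forall>j<?R. zstable (\<lambda>w. S w l (h - 1) j) w)) \<longrightarrow>
      zstable (\<lambda>w. S w l h i) w"
    proof eventually_elim
      case (elim w)
      have sdef: "(\<lambda>w. S w l h i) = (\<lambda>w. (1 / sqrt (real ?R)) *
          (\<Sum>j\<in>{..<?R}. w (BMid l h, i, j) * rin w l (res_y d n nh m \<alpha> x w (l - 1)) h j))"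
        using res_inner_pos[OF h(1)] by simp
      show ?case
      proof (intro impI)
        assume base: "\<exists>j<n. res_y d n nh m \<alpha> x w (l - 1) j \<noteq> 0"
          and prev: "2 \<le> h \<longrightarrow> (\<forall>j<?R. zstable (\<lambda>w. S w l (h - 1) j) w)"
        show "zstable (\<lambda>w. S w l h i) w"
        proof (cases "\<forall>j\<in>{..<?R}. rin w l (res_y d n nh m \<alpha> x w (l - 1)) h j = 0")
          case False
          then have "(\<Sum>j\<in>{..<?R}. w (BMid l h, i, j) * rin w l (res_y d n nh m \<alpha> x w (l - 1)) h j) \<noteq> 0"
            using elim by auto
          then show ?thesis unfolding sdef using Rpos by (intro zstable_nz) simp
        next
          case True
          have h2: "2 \<le> h"
          proof (rule ccontr)
            assume "\<not> 2 \<le> h"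
            then have "h = 1" using h by simp
            then show False using True base by (auto simp: rin_def rdim_def)
          qed
          have "zstable (\<lambda>w. rin w l (res_y d n nh m \<alpha> x w (l - 1)) h j) w" if "j \<in> {..<?R}" for j
          proof -
            have "zstable (\<lambda>w. sqrt 2 * relu (S w l (h - 1) j)) w"
              using prev that h2 by (intro zstable_relu S_lcont) auto
            then show ?thesis using h2 by (simp add: rin_def)
          qed
          then show ?thesis unfolding sdef using True by (intro zstable_sum) auto
        qed
      qed
    qed
  qed
  then show ?thesis by eventually_elim blast
qed


lemma res_relu_claim:
  assumes x: "\<exists>j<d. x j \<noteq> 0" and n0: "0 < n" and m: "1 \<le> m"
    and nh: "\<forall>l h. 1 \<le> l \<and> l \<le> L \<and> 1 \<le> h \<and> h < m \<longrightarrow> 0 < nh l h"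
    and \<alpha>: "\<forall>l. 1 \<le> l \<and> l \<le> L \<longrightarrow> 0 < \<alpha> l"
    and l: "1 \<le> l" "l \<le> L"
  shows "h < m \<Longrightarrow> AE w in RM. \<forall>h'. 1 \<le> h' \<and> h' \<le> h \<longrightarrow> (\<forall>i<rdim n nh m l h'. zstable (\<lambda>w. S w l h' i) w)"
proof (induction h)
  case 0
  then show ?case by simp
next
  case (Suc h)
  have IH: "AE w in RM. \<forall>h'. 1 \<le> h' \<and> h' \<le> h \<longrightarrow> (\<forall>i<rdim n nh m l h'. zstable (\<lambda>w. S w l h' i) w)"
    using Suc by simp
  have B: "AE w in RM. \<exists>j<n. res_y d n nh m \<alpha> x w (l - 1) j \<noteq> 0"
    using res_Yclaim[OF x n0 m nh \<alpha>, of "l - 1"] l by simp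
  have h1: "1 \<le> Suc h" by simp
  from IH B res_relu_step[OF l h1 Suc.prems n0 nh]
  show ?case
  proof eventually_elim
    case (elim w)
    show ?case
    proof (rule allI, rule impI)
      fix h' assume h': "1 \<le> h' \<and> h' \<le> Suc h"
      show "\<forall>i<rdim n nh m l h'. zstable (\<lambda>w. S w l h' i) w"
      proof (cases "h' \<le> h")
        case True then show ?thesis using elim h' by blast
      next
        case False
        then have "h' = Suc h" using h' by simp
        then show ?thesis using elim by auto
      qed
    qed
  qed
qed

lemma res_tgts: "v \<in> tgt ` res_edges d n nh m L \<alpha> dout \<Longrightarrow>
    (\<exists>l i. v = N l 0 i) \<or> (\<exists>l h i. v = N l h i \<and> 1 \<le> l \<and> l \<le> L \<and> 1 \<le> h \<and> h \<le> m \<and> i < rdim n nh m l h)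
    \<or> (\<exists>r. v = NOut r)"
  by (auto simp: res_edges_def tgt_def)

theorem res_main:
  assumes x: "\<exists>j<d. x j \<noteq> 0" and n0: "0 < n" and m: "1 \<le> m"
    and nh: "\<forall>l h. 1 \<le> l \<and> l \<le> L \<and> 1 \<le> h \<and> h < m \<longrightarrow> 0 < nh l h"
    and \<alpha>: "\<forall>l. 1 \<le> l \<and> l \<le> L \<longrightarrow> 0 < \<alpha> l" and r: "r < dout"
  shows "partials_agree_ae (res_idx d n nh m L dout)
              (\<lambda>w. res_f d n nh m L \<alpha> x w r)
              (\<lambda>w. path_fk (res_edges d n nh m L \<alpha> dout) (in_nodes d) (NOut r) (xin x)
                     (res_act d n nh m \<alpha> x w) w k)
              k"
proof (rule assemble[OF res_edges_finite res_rk[OF m]])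
  show "\<And>w'. res_f d n nh m L \<alpha> x w' r = rPS w' (NOut r)" using res_F[OF m r] .
  have "AE w in RM. \<forall>l\<in>{1..L}. \<forall>h'. 1 \<le> h' \<and> h' \<le> m - 1 \<longrightarrow> (\<forall>i<rdim n nh m l h'. zstable (\<lambda>w. S w l h' i) w)"
    using res_relu_claim[OF x n0 m nh \<alpha>] m by (subst AE_finite_all) auto
  then show "AE w in RM. \<forall>a. \<forall>v\<in>tgt ` res_edges d n nh m L \<alpha> dout. \<forall>\<^sub>F t in nhds (w a).
          res_act d n nh m \<alpha> x (w(a := t)) v = res_act d n nh m \<alpha> x w v"
  proof eventually_elim
    case (elim w)
    show ?case
    proof (intro allI ballI)
      fix a v assume "v \<in> tgt ` res_edges d n nh m L \<alpha> dout"
      then consider (a) l i where "v = N l 0 i"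
        | (b) l h i where "v = N l h i" "1 \<le> l" "l \<le> L" "1 \<le> h" "h \<le> m" "i < rdim n nh m l h"
        | (c) r where "v = NOut r"
        using res_tgts by blast
      then show "\<forall>\<^sub>F t in nhds (w a). res_act d n nh m \<alpha> x (w(a := t)) v = res_act d n nh m \<alpha> x w v"
      proof cases
        case a then show ?thesis by (simp add: res_act_def)
      next
        case b
        show ?thesis
        proof (cases "h = m")
          case True then show ?thesis using b by (simp add: res_act_def)
        next
          case False
          then have "zstable (\<lambda>w. S w l h i) w" using elim b by auto
          from zstable_sign[OF S_lcont this, of a]
          show ?thesis using b False by (simp add: res_act_def)
        qed
      next
        case c then show ?thesis by (simp add: res_act_def)
      qed
    qed
  qed
qed

end



locale dctx =
  fixes d :: nat and n :: "nat \<Rightarrow> nat" and L :: nat and \<alpha> :: real and dout :: nat and x :: "nat \<Rightarrow> real"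
begin

definition dN where "dN = Max (insert d (insert dout (n ` {..L})))"

lemma dN_ge: "d \<le> dN" "dout \<le> dN" "l \<le> L \<Longrightarrow> n l \<le> dN"
  unfolding dN_def by (rule Max_ge; simp)+

lemma dense_idx_finite: "finite (dense_idx d n L dout)"
proof -
  have "dense_idx d n L dout \<subseteq> (insert BIn (insert BOut ((\<lambda>(l, h). BMid l h) ` ({..L} \<times> {..L})))) \<times> {..dN} \<times> {..dN}"
  proof
    fix a assume "a \<in> dense_idx d n L dout"
    then consider (a) i j where "a = (BIn, i, j)" "i < n 0" "j < d"
      | (b) l h i j where "a = (BMid l h, i, j)" "1 \<le> l" "l \<le> L" "h < l" "i < n l" "j < n h"
      | (c) r j where "a = (BOut, r, j)" "r < dout" "j < n L"
      unfolding dense_idx_def by blast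
    then show "a \<in> (insert BIn (insert BOut ((\<lambda>(l, h). BMid l h) ` ({..L} \<times> {..L})))) \<times> {..dN} \<times> {..dN}"
    proof cases
      case a then show ?thesis using dN_ge(1) dN_ge(3)[of 0] by auto
    next
      case b
      then have "n l \<le> dN" "n h \<le> dN" using dN_ge(3) by auto
      then show ?thesis using b by auto
    next
      case c then show ?thesis using dN_ge(2) dN_ge(3)[of L] by auto
    qed
  qed
  then show ?thesis by (rule finite_subset) auto
qed

definition dedge :: "widx \<Rightarrow> edge" where
  "dedge a = (case a of
      (BIn, i, j) \<Rightarrow> (NIn j, N 0 0 i, 1 / sqrt (real (n 0)), Some (BIn, i, j))
    | (BMid l h, i, j) \<Rightarrow> (N h 0 j, N l 0 i, sqrt (\<alpha> / (real (n (l - 1)) * real l)) * sqrt 2, Some (BMid l h, i, j))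
    | (BOut, r, j) \<Rightarrow> (N L 0 j, NOut r, 1 / sqrt (real (n L)), Some (BOut, r, j)))"

lemma dense_edges_finite: "finite (dense_edges d n L \<alpha> dout)"
  by (rule finite_by_map[OF dense_idx_finite, where g = "\<lambda>e. the (snd (snd (snd e)))" and f = dedge])
     (auto simp: dense_edges_def dense_idx_def dedge_def)

definition drk :: "node \<Rightarrow> nat" where
  "drk v = (case v of NIn _ \<Rightarrow> 0 | N l h i \<Rightarrow> l + 1 | NOut _ \<Rightarrow> L + 2)"

lemma dense_rk: "e \<in> dense_edges d n L \<alpha> dout \<Longrightarrow> drk (fst e) < drk (tgt e)"
  by (auto simp: dense_edges_def drk_def tgt_def)

lemma dense_tgt_NIn: "{e \<in> dense_edges d n L \<alpha> dout. tgt e = NIn j} = {}"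
  by (auto simp: dense_edges_def tgt_def)

lemma dense_tgt_N0: "i < n 0 \<Longrightarrow> {e \<in> dense_edges d n L \<alpha> dout. tgt e = N 0 0 i}
   = (\<lambda>j. (NIn j, N 0 0 i, 1 / sqrt (real (n 0)), Some (BIn, i, j))) ` {..<d}"
  by (auto simp: dense_edges_def tgt_def)

lemma dense_tgt_Nl:
  assumes "1 \<le> l" "l \<le> L" "i < n l"
  shows "{e \<in> dense_edges d n L \<alpha> dout. tgt e = N l 0 i}
   = (\<lambda>(h, j). (N h 0 j, N l 0 i, sqrt (\<alpha> / (real (n (l - 1)) * real l)) * sqrt 2, Some (BMid l h, i, j)))
      ` (SIGMA h:{..<l}. {..<n h})"
  using assms by (auto simp: dense_edges_def tgt_def)

lemma dense_tgt_Out: "r < dout \<Longrightarrow> {e \<in> dense_edges d n L \<alpha> dout. tgt e = NOut r}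
   = (\<lambda>j. (N L 0 j, NOut r, 1 / sqrt (real (n L)), Some (BOut, r, j))) ` {..<n L}"
  by (auto simp: dense_edges_def tgt_def)

lemma dense_ys_stable: "h \<le> l \<Longrightarrow> dense_ys d n \<alpha> x w l h = dense_y d n \<alpha> x w h"
proof (induction l)
  case 0
  then show ?case by (simp add: dense_y_def)
next
  case (Suc l)
  then show ?case by (cases "h = Suc l") (auto simp: dense_y_def)
qed

lemma dense_y_Suc: "dense_y d n \<alpha> x w (Suc l) i = sqrt (\<alpha> / (real (n l) * real (Suc l))) *
   (\<Sum>h'<Suc l. \<Sum>j<n h'. w (BMid (Suc l) h', i, j) * (sqrt 2 * relu (dense_y d n \<alpha> x w h' j)))"
  by (simp add: dense_y_def[of _ _ _ _ _ "Suc l"] dense_ys_stable)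


abbreviation dPS where
  "dPS w v \<equiv> PS (dense_edges d n L \<alpha> dout) (in_nodes d) (xin x) (dense_act d n L \<alpha> x w) w v"

lemma dPS_rec: "dPS w v = (\<Sum>e\<in>{e\<in>dense_edges d n L \<alpha> dout. tgt e = v}. efac (dense_act d n L \<alpha> x w) w e *
            ((if fst e \<in> in_nodes d then xin x (fst e) else 0) + dPS w (fst e)))"
  by (rule PS_rec[OF dense_edges_finite]) (rule dense_rk)

lemma dPS_NIn: "dPS w (NIn j) = 0"
  by (subst dPS_rec) (simp add: dense_tgt_NIn)

lemma dPS_N: "l \<le> L \<Longrightarrow> i < n l \<Longrightarrow>
   dPS w (N l 0 i) = (if dense_act d n L \<alpha> x w (N l 0 i) then 1 else 0) * dense_y d n \<alpha> x w l i"
proof (induction l arbitrary: i rule: less_induct)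
  case (less l)
  let ?A = "(if dense_act d n L \<alpha> x w (N l 0 i) then 1 else 0) :: real"
  show ?case
  proof (cases l)
    case 0
    have inj: "inj_on (\<lambda>j. (NIn j, N 0 0 i, 1 / sqrt (real (n 0)), Some (BIn, i, j))) {..<d}"
      by (auto intro: inj_onI)
    have "dPS w (N 0 0 i) = (\<Sum>j<d. 1 / sqrt (real (n 0)) * w (BIn, i, j) *
        (if dense_act d n L \<alpha> x w (N 0 0 i) then 1 else 0) * x j)"
      apply (subst dPS_rec)
      apply (subst dense_tgt_N0)
      using less.prems 0 apply simp
      apply (subst sum.reindex[OF inj])
      apply (simp only: o_def fst_conv dPS_NIn)
      apply (simp add: efac_def in_nodes_def xin_def)
      done
    then show ?thesis using 0 by (simp add: dense_y_def sum_distrib_left mult_ac)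
  next
    case (Suc l0)
    let ?c = "sqrt (\<alpha> / (real (n (l - 1)) * real l)) * sqrt 2"
    have inj: "inj_on (\<lambda>(h, j). (N h 0 j, N l 0 i, ?c, Some (BMid l h, i, j))) (SIGMA h:{..<l}. {..<n h})"
      by (auto intro!: inj_onI)
    have src: "dPS w (N h 0 j) = relu (dense_y d n \<alpha> x w h j)" if "h < l" "j < n h" for h j
    proof -
      have a: "dense_act d n L \<alpha> x w (N h 0 j) = (0 < dense_y d n \<alpha> x w h j)"
        using that less.prems by (simp add: dense_act_def)
      have "dPS w (N h 0 j) = (if dense_act d n L \<alpha> x w (N h 0 j) then 1 else 0) * dense_y d n \<alpha> x w h j"
        using less.IH[of h j] that less.prems by simp
      then show ?thesis by (simp only: a relu_ind)
    qed
    have "dPS w (N l 0 i) = (\<Sum>(h, j)\<in>(SIGMA h:{..<l}. {..<n h}). ?c * w (BMid l h, i, j) * ?A * dPS w (N h 0 j))"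
      apply (subst dPS_rec)
      apply (subst dense_tgt_Nl)
      using less.prems Suc apply auto[3]
      apply (subst sum.reindex[OF inj])
      apply (simp add: efac_def in_nodes_def o_def case_prod_unfold)
      done
    also have "\<dots> = (\<Sum>h<l. \<Sum>j<n h. ?c * w (BMid l h, i, j) * ?A * dPS w (N h 0 j))"
      by (subst sum.Sigma[symmetric]) auto
    also have "\<dots> = (\<Sum>h<l. \<Sum>j<n h. ?c * w (BMid l h, i, j) * ?A * relu (dense_y d n \<alpha> x w h j))"
      using src by (intro sum.cong refl) auto
    also have "\<dots> = ?A * dense_y d n \<alpha> x w l i"
      using Suc by (simp add: dense_y_Suc sum_distrib_left mult_ac del: sum.lessThan_Suc)
    finally show ?thesis .
  qed
qed

lemma dense_F: "r < dout \<Longrightarrow> dense_f d n L \<alpha> x w r = dPS w (NOut r)"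
proof -
  assume r: "r < dout"
  have inj: "inj_on (\<lambda>j. (N L 0 j, NOut r, 1 / sqrt (real (n L)), Some (BOut, r, j))) {..<n L}"
    by (auto intro: inj_onI)
  have "dPS w (NOut r) = (\<Sum>j<n L. 1 / sqrt (real (n L)) * w (BOut, r, j) * dPS w (N L 0 j))"
    apply (subst dPS_rec)
    apply (subst dense_tgt_Out[OF r])
    apply (subst sum.reindex[OF inj])
    apply (simp add: efac_def dense_act_def in_nodes_def)
    done
  also have "\<dots> = dense_f d n L \<alpha> x w r"
    using dPS_N[of L] by (simp add: dense_f_def dense_act_def sum_distrib_left mult_ac)
  finally show ?thesis by simp
qed


lemma dense_ys_indep: "fst a \<notin> insert BIn {BMid l' h |l' h. l' \<le> l} \<Longrightarrow>
    dense_ys d n \<alpha> x (w(a := t)) l = dense_ys d n \<alpha> x w l"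
proof (induction l)
  case 0
  then show ?case by (auto intro!: ext sum.cong)
next
  case (Suc l)
  have IH: "dense_ys d n \<alpha> x (w(a := t)) l = dense_ys d n \<alpha> x w l"
    using Suc.prems by (intro Suc.IH) auto
  have ne: "(w(a := t)) (BMid (Suc l) h', i, j) = w (BMid (Suc l) h', i, j)" for h' i j
  proof -
    have "a \<noteq> (BMid (Suc l) h', i, j)" using Suc.prems by auto
    then show ?thesis by simp
  qed
  show ?case by (simp only: dense_ys.simps IH ne)
qed

lemma dense_y_indep: "fst a \<notin> insert BIn {BMid l' h |l' h. l' \<le> l} \<Longrightarrow>
    dense_y d n \<alpha> x (w(a := t)) l i = dense_y d n \<alpha> x w l i"
  unfolding dense_y_def using dense_ys_indep by simp

lemma dense_ys_meas[measurable]: "(\<lambda>w. dense_ys d n \<alpha> x w l h i) \<in> borel_measurable (Pi\<^sub>M I (\<lambda>_. lborel))"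
proof (induction l arbitrary: h i)
  case 0
  show ?case unfolding dense_ys.simps
    by (intro borel_measurable_divide borel_measurable_times borel_measurable_sum borel_measurable_const meas_comp_any)
next
  case (Suc l)
  have r: "(\<lambda>w. relu (dense_ys d n \<alpha> x w l h' j)) \<in> borel_measurable (Pi\<^sub>M I (\<lambda>_. lborel))" for h' j
    using measurable_compose[OF Suc.IH relu_measurable] by (simp add: o_def)
  show ?case
  proof (cases "h = Suc l")
    case True
    then show ?thesis unfolding dense_ys.simps using r by simp
  next
    case False
    then show ?thesis unfolding dense_ys.simps using Suc.IH by simp
  qed
qed

lemma dense_y_meas: "(\<lambda>w. dense_y d n \<alpha> x w l i) \<in> borel_measurable (Pi\<^sub>M I (\<lambda>_. lborel))"
  unfolding dense_y_def by (rule dense_ys_meas)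

lemma dense_ys_lcont: "lcont (\<lambda>w. dense_ys d n \<alpha> x w l h i)"
proof (induction l arbitrary: h i)
  case 0
  show ?case unfolding dense_ys.simps by (intro lcont_div lcont_mult lcont_sum lcont_comp_w lcont_const)
next
  case (Suc l)
  have r: "lcont (\<lambda>w. relu (dense_ys d n \<alpha> x w l h' j))" for h' j
    by (intro lcont_relu Suc.IH)
  show ?case
  proof (cases "h = Suc l")
    case True
    then show ?thesis unfolding dense_ys.simps using r
      by (simp del: sum.lessThan_Suc) (intro lcont_mult lcont_sum lcont_comp_w lcont_const; simp)
  next
    case False
    then show ?thesis unfolding dense_ys.simps using Suc.IH by simp
  qed
qed

lemma dense_y_lcont: "lcont (\<lambda>w. dense_y d n \<alpha> x w l i)"
  unfolding dense_y_def by (rule dense_ys_lcont)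


abbreviation "DM \<equiv> Pi\<^sub>M (dense_idx d n L dout) (\<lambda>_. lborel :: real measure)"

lemma dense_base:
  assumes x: "\<exists>j<d. x j \<noteq> 0" and n0: "0 < n 0" and i: "i < n 0"
  shows "AE w in DM. zstable (\<lambda>w. dense_y d n \<alpha> x w 0 i) w"
proof -
  have "AE w in DM. (\<forall>j\<in>{..<d}. (\<lambda>w. x j) w = 0) \<or> (\<lambda>w. 0) w + (\<Sum>j\<in>{..<d}. w (BIn, i, j) * (\<lambda>w. x j) w) \<noteq> 0"
    by (rule lin_null[OF dense_idx_finite]) (auto intro: inj_onI simp: dense_idx_def i)
  then show ?thesis
  proof eventually_elim
    case (elim w)
    then have "(\<Sum>j<d. w (BIn, i, j) * x j) \<noteq> 0" using x by auto
    then have "dense_y d n \<alpha> x w 0 i \<noteq> 0" using n0 by (simp add: dense_y_def)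
    then show ?case by (rule zstable_nz)
  qed
qed

lemma dense_step:
  assumes l: "Suc l \<le> L" and npos: "\<forall>l\<le>L. 0 < n l" and \<alpha>: "0 < \<alpha>"
  shows "AE w in DM. (\<forall>h\<le>l. \<forall>j<n h. zstable (\<lambda>w. dense_y d n \<alpha> x w h j) w) \<longrightarrow>
            (\<forall>i<n (Suc l). zstable (\<lambda>w. dense_y d n \<alpha> x w (Suc l) i) w)"
proof -
  let ?J = "SIGMA h:{..<Suc l}. {..<n h}"
  let ?c = "sqrt (\<alpha> / (real (n l) * real (Suc l)))"
  have nl: "0 < n l" using npos l by auto
  have cnz: "?c \<noteq> 0" using nl \<alpha> by simp
  have finJ: "finite ?J" by auto
  have "AE w in DM. \<forall>i\<in>{..<n (Suc l)}. (\<forall>h\<le>l. \<forall>j<n h. zstable (\<lambda>w. dense_y d n \<alpha> x w h j) w) \<longrightarrow>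
            zstable (\<lambda>w. dense_y d n \<alpha> x w (Suc l) i) w"
  proof (subst AE_finite_all, simp, intro ballI)
    fix i assume i: "i \<in> {..<n (Suc l)}"
    let ?u = "\<lambda>p w. sqrt 2 * relu (dense_y d n \<alpha> x w (fst p) (snd p))"
    have "AE w in DM. (\<forall>p\<in>?J. ?u p w = 0) \<or>
        (\<lambda>w. 0) w + (\<Sum>p\<in>?J. w (BMid (Suc l) (fst p), i, snd p) * ?u p w) \<noteq> 0"
    proof (rule lin_null[OF dense_idx_finite finJ])
      show "inj_on (\<lambda>p. (BMid (Suc l) (fst p), i, snd p)) ?J" by (auto intro!: inj_onI)
      show "(\<lambda>p. (BMid (Suc l) (fst p), i, snd p)) ` ?J \<subseteq> dense_idx d n L dout"
        using i l by (auto simp: dense_idx_def)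
      show "\<And>p. p \<in> ?J \<Longrightarrow> (\<lambda>w. sqrt 2 * relu (dense_y d n \<alpha> x w (fst p) (snd p))) \<in> borel_measurable DM"
        using measurable_compose[OF dense_y_meas relu_measurable]
        by (intro borel_measurable_times borel_measurable_const) (simp add: o_def)
      fix p p' :: "nat \<times> nat" and w :: "widx \<Rightarrow> real" and t
      assume "p \<in> ?J" "p' \<in> ?J"
      then show "sqrt 2 * relu (dense_y d n \<alpha> x (w((BMid (Suc l) (fst p'), i, snd p') := t)) (fst p) (snd p))
          = sqrt 2 * relu (dense_y d n \<alpha> x w (fst p) (snd p))"
        by (subst dense_y_indep) auto
    qed auto
    then show "AE w in DM. (\<forall>h\<le>l. \<forall>j<n h. zstable (\<lambda>w. dense_y d n \<alpha> x w h j) w) \<longrightarrow>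
            zstable (\<lambda>w. dense_y d n \<alpha> x w (Suc l) i) w"
    proof eventually_elim
      case (elim w)
      have sig: "(\<Sum>p\<in>?J. g (fst p) (snd p)) = (\<Sum>h<Suc l. \<Sum>j<n h. g h j)" for g :: "nat \<Rightarrow> nat \<Rightarrow> real"
        using sum.Sigma[of "{..<Suc l}" "\<lambda>h. {..<n h}" g] by (simp add: case_prod_unfold)
      have ydef: "(\<lambda>w. dense_y d n \<alpha> x w (Suc l) i)
          = (\<lambda>w. ?c * (\<Sum>p\<in>?J. w (BMid (Suc l) (fst p), i, snd p) * ?u p w))"
      proof
        fix w :: "widx \<Rightarrow> real"
        show "dense_y d n \<alpha> x w (Suc l) i = ?c * (\<Sum>p\<in>?J. w (BMid (Suc l) (fst p), i, snd p) * ?u p w)"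
          using sig[of "\<lambda>h j. w (BMid (Suc l) h, i, j) * (sqrt 2 * relu (dense_y d n \<alpha> x w h j))"]
          by (simp only: dense_y_Suc)
      qed
      show ?case
      proof
        assume prev: "\<forall>h\<le>l. \<forall>j<n h. zstable (\<lambda>w. dense_y d n \<alpha> x w h j) w"
        show "zstable (\<lambda>w. dense_y d n \<alpha> x w (Suc l) i) w"
        proof (cases "\<forall>p\<in>?J. ?u p w = 0")
          case False
          then have "(\<Sum>p\<in>?J. w (BMid (Suc l) (fst p), i, snd p) * ?u p w) \<noteq> 0" using elim by auto
          then show ?thesis unfolding ydef using cnz by (intro zstable_nz) simp
        next
          case True
          have "zstable (?u p) w" if "p \<in> ?J" for p
            using prev that by (intro zstable_relu dense_y_lcont) auto
          then show ?thesis unfolding ydef using True by (intro zstable_sum[OF finJ]) auto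
        qed
      qed
    qed
  qed
  then show ?thesis by eventually_elim blast
qed

lemma dense_claim:
  assumes x: "\<exists>j<d. x j \<noteq> 0" and npos: "\<forall>l\<le>L. 0 < n l" and \<alpha>: "0 < \<alpha>"
  shows "l < L \<Longrightarrow> AE w in DM. \<forall>h\<le>l. \<forall>j<n h. zstable (\<lambda>w. dense_y d n \<alpha> x w h j) w"
proof (induction l)
  case 0
  have "AE w in DM. \<forall>j\<in>{..<n 0}. zstable (\<lambda>w. dense_y d n \<alpha> x w 0 j) w"
    using dense_base[OF x] npos by (subst AE_finite_all) auto
  then show ?case by eventually_elim auto
next
  case (Suc l)
  have IH: "AE w in DM. \<forall>h\<le>l. \<forall>j<n h. zstable (\<lambda>w. dense_y d n \<alpha> x w h j) w" using Suc by simp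
  have sl: "Suc l \<le> L" using Suc.prems by simp
  from IH dense_step[OF sl npos \<alpha>]
  show ?case
  proof eventually_elim
    case (elim w)
    show ?case
    proof (intro allI impI)
      fix h j assume "h \<le> Suc l" "j < n h"
      then show "zstable (\<lambda>w. dense_y d n \<alpha> x w h j) w"
        using elim Suc.prems by (cases "h = Suc l") auto
    qed
  qed
qed

lemma dense_tgts: "v \<in> tgt ` dense_edges d n L \<alpha> dout \<Longrightarrow>
    (\<exists>l i. v = N l 0 i \<and> l \<le> L \<and> i < n l) \<or> (\<exists>r. v = NOut r)"
  by (auto simp: dense_edges_def tgt_def)

theorem dense_main:
  assumes x: "\<exists>j<d. x j \<noteq> 0" and npos: "\<forall>l\<le>L. 0 < n l" and \<alpha>: "0 < \<alpha>" and r: "r < dout"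
  shows "partials_agree_ae (dense_idx d n L dout)
              (\<lambda>w. dense_f d n L \<alpha> x w r)
              (\<lambda>w. path_fk (dense_edges d n L \<alpha> dout) (in_nodes d) (NOut r) (xin x)
                     (dense_act d n L \<alpha> x w) w k)
              k"
proof (rule assemble[OF dense_edges_finite dense_rk])
  show "\<And>w'. dense_f d n L \<alpha> x w' r = dPS w' (NOut r)" using dense_F[OF r] .
  have AEc: "AE w in DM. \<forall>h<L. \<forall>j<n h. zstable (\<lambda>w. dense_y d n \<alpha> x w h j) w"
  proof (cases L)
    case 0 then show ?thesis by simp
  next
    case (Suc L0)
    from dense_claim[OF x npos \<alpha>, of L0] Suc show ?thesis
      by (auto elim!: eventually_mono)
  qed
  show "AE w in DM. \<forall>a. \<forall>v\<in>tgt ` dense_edges d n L \<alpha> dout. \<forall>\<^sub>F t in nhds (w a).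
          dense_act d n L \<alpha> x (w(a := t)) v = dense_act d n L \<alpha> x w v"
    using AEc
  proof eventually_elim
    case (elim w)
    show ?case
    proof (intro allI ballI)
      fix a v assume "v \<in> tgt ` dense_edges d n L \<alpha> dout"
      then consider (a) l i where "v = N l 0 i" "l \<le> L" "i < n l" | (b) r where "v = NOut r"
        using dense_tgts by blast
      then show "\<forall>\<^sub>F t in nhds (w a). dense_act d n L \<alpha> x (w(a := t)) v = dense_act d n L \<alpha> x w v"
      proof cases
        case a
        show ?thesis
        proof (cases "l = L")
          case True then show ?thesis using a by (simp add: dense_act_def)
        next
          case False
          then have "zstable (\<lambda>w. dense_y d n \<alpha> x w l i) w" using elim a by auto
          from zstable_sign[OF dense_y_lcont this, of a]
          show ?thesis using a False by (simp add: dense_act_def)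
        qed
      next
        case b then show ?thesis by (simp add: dense_act_def)
      qed
    qed
  qed
qed

end

theorem lemma2:
  shows "(\<forall>d (n :: nat \<Rightarrow> nat) L dout (x :: nat \<Rightarrow> real) r k.
            (\<exists>j<d. x j \<noteq> 0) \<and> (\<forall>l\<le>L. 0 < n l) \<and> r < dout \<longrightarrow>
            partials_agree_ae (van_idx d n L dout)
              (\<lambda>w. van_f d n L x w r)
              (\<lambda>w. path_fk (van_edges d n L dout) (in_nodes d) (NOut r) (xin x) (van_act d n x w) w k)
              k)
       \<and> (\<forall>d (n :: nat) nh m L (\<alpha> :: nat \<Rightarrow> real) dout (x :: nat \<Rightarrow> real) r k.
            (\<exists>j<d. x j \<noteq> 0) \<and> 0 < n \<and> 1 \<le> m
            \<and> (\<forall>l h. 1 \<le> l \<and> l \<le> L \<and> 1 \<le> h \<and> h < m \<longrightarrow> 0 < nh l h)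
            \<and> (\<forall>l. 1 \<le> l \<and> l \<le> L \<longrightarrow> 0 < \<alpha> l) \<and> r < dout \<longrightarrow>
            partials_agree_ae (res_idx d n nh m L dout)
              (\<lambda>w. res_f d n nh m L \<alpha> x w r)
              (\<lambda>w. path_fk (res_edges d n nh m L \<alpha> dout) (in_nodes d) (NOut r) (xin x)
                     (res_act d n nh m \<alpha> x w) w k)
              k)
       \<and> (\<forall>d (n :: nat \<Rightarrow> nat) L (\<alpha> :: real) dout (x :: nat \<Rightarrow> real) r k.
            (\<exists>j<d. x j \<noteq> 0) \<and> (\<forall>l\<le>L. 0 < n l) \<and> 0 < \<alpha> \<and> r < dout \<longrightarrow>
            partials_agree_ae (dense_idx d n L dout)
              (\<lambda>w. dense_f d n L \<alpha> x w r)
              (\<lambda>w. path_fk (dense_edges d n L \<alpha> dout) (in_nodes d) (NOut r) (xin x)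
                     (dense_act d n L \<alpha> x w) w k)
              k)"
proof (intro conjI allI impI)
  fix d :: nat and n :: "nat \<Rightarrow> nat" and L dout :: nat and x :: "nat \<Rightarrow> real" and r :: nat and k :: blk
  assume "(\<exists>j<d. x j \<noteq> 0) \<and> (\<forall>l\<le>L. 0 < n l) \<and> r < dout"
  then show "partials_agree_ae (van_idx d n L dout) (\<lambda>w. van_f d n L x w r)
     (\<lambda>w. path_fk (van_edges d n L dout) (in_nodes d) (NOut r) (xin x) (van_act d n x w) w k) k"
    using van_main by blast
next
  fix d n :: nat and nh :: "nat \<Rightarrow> nat \<Rightarrow> nat" and m L :: nat and \<alpha> :: "nat \<Rightarrow> real"
    and dout :: nat and x :: "nat \<Rightarrow> real" and r :: nat and k :: blk
  assume "(\<exists>j<d. x j \<noteq> 0) \<and> 0 < n \<and> 1 \<le> m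
            \<and> (\<forall>l h. 1 \<le> l \<and> l \<le> L \<and> 1 \<le> h \<and> h < m \<longrightarrow> 0 < nh l h)
            \<and> (\<forall>l. 1 \<le> l \<and> l \<le> L \<longrightarrow> 0 < \<alpha> l) \<and> r < dout"
  then show "partials_agree_ae (res_idx d n nh m L dout)
              (\<lambda>w. res_f d n nh m L \<alpha> x w r)
              (\<lambda>w. path_fk (res_edges d n nh m L \<alpha> dout) (in_nodes d) (NOut r) (xin x)
                     (res_act d n nh m \<alpha> x w) w k)
              k"
    using resctx.res_main by blast
next
  fix d :: nat and n :: "nat \<Rightarrow> nat" and L :: nat and \<alpha> :: real and dout :: nat
    and x :: "nat \<Rightarrow> real" and r :: nat and k :: blk
  assume "(\<exists>j<d. x j \<noteq> 0) \<and> (\<forall>l\<le>L. 0 < n l) \<and> 0 < \<alpha> \<and> r < dout"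
  then show "partials_agree_ae (dense_idx d n L dout)
              (\<lambda>w. dense_f d n L \<alpha> x w r)
              (\<lambda>w. path_fk (dense_edges d n L \<alpha> dout) (in_nodes d) (NOut r) (xin x)
                     (dense_act d n L \<alpha> x w) w k)
              k"
    using dctx.dense_main by blast
qed

end
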